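(* Let $Q$ be an automorphic loop and $x,y\in Q$. If either $x^{-1}(xy^2)=(xy)(x^{-1}y)$ or $x^{-1}(xy^2)=(x^{-1}y)(xy)$, then $xy=yx$.
   Context: A loop is a set with a binary operation in which all equations $ax=b$, $ya=b$ are uniquely solvable and which has a two-sided identity. For $a\in L$, $R_a:x\mapsto xa$, $L_a:x\mapsto ax$; the inner mapping group is the stabilizer of the identity in the group generated by all $R_a,L_a$. A loop is automorphic if every inner mapping is an automorphism. Automorphic loops are power associative, so $x^{-1}$ and $y^2$ are well defined. *)

theory Defs
  imports Main
begin

definition loop :: "('a \<Rightarrow> 'a \<Rightarrow> 'a) \<Rightarrow> 'a \<Rightarrow> bool" where
  "loop m e \<longleftrightarrow>
     (\<forall>a b. \<exists>!x. m a x = b) \<and> (\<forall>a b. \<exists>!y. m y a = b) \<and>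
     (\<forall>x. m e x = x \<and> m x e = x)"

definition rmult :: "('a \<Rightarrow> 'a \<Rightarrow> 'a) \<Rightarrow> 'a \<Rightarrow> 'a \<Rightarrow> 'a" where
  "rmult m a = (\<lambda>x. m x a)"

definition lmult :: "('a \<Rightarrow> 'a \<Rightarrow> 'a) \<Rightarrow> 'a \<Rightarrow> 'a \<Rightarrow> 'a" where
  "lmult m a = (\<lambda>x. m a x)"

inductive_set mlt_group :: "('a \<Rightarrow> 'a \<Rightarrow> 'a) \<Rightarrow> ('a \<Rightarrow> 'a) set" for m where
  mlt_id: "id \<in> mlt_group m"
| mlt_R: "f \<in> mlt_group m \<Longrightarrow> rmult m a \<circ> f \<in> mlt_group m"
| mlt_L: "f \<in> mlt_group m \<Longrightarrow> lmult m a \<circ> f \<in> mlt_group m"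
| mlt_Rinv: "f \<in> mlt_group m \<Longrightarrow> inv (rmult m a) \<circ> f \<in> mlt_group m"
| mlt_Linv: "f \<in> mlt_group m \<Longrightarrow> inv (lmult m a) \<circ> f \<in> mlt_group m"

definition inner_maps :: "('a \<Rightarrow> 'a \<Rightarrow> 'a) \<Rightarrow> 'a \<Rightarrow> ('a \<Rightarrow> 'a) set" where
  "inner_maps m e = {f \<in> mlt_group m. f e = e}"

definition loop_aut :: "('a \<Rightarrow> 'a \<Rightarrow> 'a) \<Rightarrow> ('a \<Rightarrow> 'a) \<Rightarrow> bool" where
  "loop_aut m f \<longleftrightarrow> bij f \<and> (\<forall>x y. f (m x y) = m (f x) (f y))"

definition automorphic_loop :: "('a \<Rightarrow> 'a \<Rightarrow> 'a) \<Rightarrow> 'a \<Rightarrow> bool" where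
  "automorphic_loop m e \<longleftrightarrow> loop m e \<and> (\<forall>f \<in> inner_maps m e. loop_aut m f)"

text \<open>Inverse (well defined and two-sided in automorphic loops, which are
  power associative); taken as the unique right inverse.\<close>
definition loop_inv :: "('a \<Rightarrow> 'a \<Rightarrow> 'a) \<Rightarrow> 'a \<Rightarrow> 'a \<Rightarrow> 'a" where
  "loop_inv m e x = (THE y. m x y = e)"

end

theory Submission
  imports Defs
begin

locale aloop =
  fixes m :: "'a \<Rightarrow> 'a \<Rightarrow> 'a" and ld rd :: "'a \<Rightarrow> 'a \<Rightarrow> 'a" and e :: 'a
  assumes a1: "ld x (m x y) = y" and a2: "m x (ld x y) = y"
    and a3: "rd (m x y) y = x" and a4: "m (rd x y) y = x"
    and a5: "m e x = x" and a6: "m x e = x"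
    and t: "ld x (m (m y z) x) = m (ld x (m y x)) (ld x (m z x))"
    and l: "ld (m y x) (m y (m x (m z w))) = m (ld (m y x) (m y (m x z))) (ld (m y x) (m y (m x w)))"
    and r: "rd (m (m (m z w) x) y) (m x y) = m (rd (m (m z x) y) (m x y)) (rd (m (m w x) y) (m x y))"
begin
end


locale aloop1 = aloop +
  fixes a b
  assumes h: "m (ld a e) (m a (m b b)) = m (m a b) (m (ld a e) b)"
begin
lemma pc_0_11: "ld x1 (m (m x2 x3) x1) = m (ld x1 (m x2 x1)) (ld x1 (m x3 x1))" by (fact t)
lemma pc_0_12: "m (rd x1 x2) x2 = x1" by (fact a4)
lemma pc_0_13: "ld x1 (m x1 x2) = x2" by (fact a1)
lemma pc_0_14: "m x1 (ld x1 x2) = x2" by (fact a2)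
lemma pc_0_15: "ld (m x1 x2) (m x1 (m x2 (m x3 x4))) = m (ld (m x1 x2) (m x1 (m x2 x3))) (ld (m x1 x2) (m x1 (m x2 x4)))" by (fact l)
lemma pc_0_16: "m (ld x1 (m x2 x1)) (ld x1 x3) = ld x1 (m (m x2 (rd x3 x1)) x1)" by (metis pc_0_11 pc_0_12)
lemma pc_0_17: "ld x1 (m (m x1 x2) x1) = m x2 x1" by (metis pc_0_11 pc_0_13 pc_0_14)
lemma pc_0_18: "ld (m x1 x1) (m x1 (m x1 (m x1 x1))) = m x1 x1" by (metis pc_0_11 pc_0_13 pc_0_15)
lemma pc_0_19: "ld x1 (m (m x2 (rd (m x1 x3) x1)) x1) = m (ld x1 (m x2 x1)) x3" by (metis pc_0_13 pc_0_16)
lemma pc_0_20: "rd (m x1 x2) x2 = x1" by (fact a3)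
lemma pc_0_21: "m (m x1 x2) x1 = m x1 (m x2 x1)" by (metis pc_0_14 pc_0_17)
lemma pc_0_22: "ld (m x1 x1) (m x1 (m x1 (m (m x1 x1) x2))) = m x1 (m x1 x2)" by (metis pc_0_14 pc_0_15 pc_0_18)
lemma pc_0_23: "m (m x1 (rd (m x2 x3) x2)) x2 = m x2 (m (ld x2 (m x1 x2)) x3)" by (metis pc_0_14 pc_0_19)
lemma pc_0_24: "rd (m x1 (m x2 x1)) x1 = m x1 x2" by (metis pc_0_20 pc_0_21)
lemma pc_0_25: "m (m x1 x1) (m x1 (m x1 x2)) = m x1 (m x1 (m (m x1 x1) x2))" by (metis pc_0_14 pc_0_22)
lemma pc_0_26: "m x1 (m (ld x1 (m x2 x1)) (m x3 x1)) = m (m x2 (m x1 x3)) x1" by (metis pc_0_23 pc_0_24)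
lemma pc_0_27: "m x1 (m (ld x1 x2) x1) = m x2 x1" by (metis pc_0_14 pc_0_21)
lemma pc_0_28: "m x1 (m x1 (m (m x1 x1) (ld x1 x2))) = m (m x1 x1) (m x1 x2)" by (metis pc_0_14 pc_0_25)
lemma pc_0_29: "m (m (m x1 x2) (m x1 x3)) x1 = m x1 (m (m x2 x1) (m x3 x1))" by (metis pc_0_13 pc_0_21 pc_0_26)
lemma pc_0_30: "m (ld x1 x2) x1 = ld x1 (m x2 x1)" by (metis pc_0_13 pc_0_27)
lemma pc_0_31: "m x1 (m (m x1 x1) (ld x1 x2)) = ld x1 (m (m x1 x1) (m x1 x2))" by (metis pc_0_13 pc_0_28)
lemma pc_0_32: "m x1 (m (m x2 x1) (ld x1 (m x3 x1))) = m (m (m x1 x2) x3) x1" by (metis pc_0_14 pc_0_29 pc_0_30)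
lemma pc_0_33: "ld x1 (m (m x1 x1) (m x1 (m x2 x1))) = m (m (m x1 x1) x2) x1" by (metis pc_0_31 pc_0_32)
lemma pc_0_34: "m (m x1 x1) (m x1 (m x2 x1)) = m x1 (m (m (m x1 x1) x2) x1)" by (metis pc_0_14 pc_0_33)
lemma pc_0_35: "rd (m (m (m x1 x2) x3) x4) (m x3 x4) = m (rd (m (m x1 x3) x4) (m x3 x4)) (rd (m (m x2 x3) x4) (m x3 x4))" by (fact r)
lemma pc_0_36: "m x1 (m (m (m x1 x1) (rd x2 x1)) x1) = m (m x1 x1) (m x1 x2)" by (metis pc_0_12 pc_0_34)
lemma pc_0_37: "m x1 (rd x2 x1) = rd (m x1 x2) x1" by (metis pc_0_12 pc_0_24)
lemma pc_0_38: "rd (ld x1 (m x2 x1)) x1 = ld x1 x2" by (metis pc_0_20 pc_0_30)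
lemma pc_0_39: "ld (m x1 x2) (m x1 (m x2 x1)) = x1" by (metis pc_0_13 pc_0_21)
lemma pc_0_40: "rd (rd (m (m (m x1 x2) x3) x4) (m x3 x4)) (rd (m (m x2 x3) x4) (m x3 x4)) = rd (m (m x1 x3) x4) (m x3 x4)" by (metis pc_0_20 pc_0_35)
lemma pc_0_41: "m (m (m x1 x1) (rd x2 x1)) x1 = ld x1 (m (m x1 x1) (m x1 x2))" by (metis pc_0_13 pc_0_36)
lemma pc_0_42: "m (rd x1 x2) (rd (m x2 x1) x2) = m x1 (rd x1 x2)" by (metis pc_0_12 pc_0_21 pc_0_37)
lemma pc_0_43: "rd x1 (m x1 x1) = ld (m x1 x1) x1" by (metis pc_0_38 pc_0_39)
lemma pc_0_44: "m x1 e = x1" by (fact a6)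
lemma pc_0_45: "m e x1 = x1" by (fact a5)
lemma pc_0_46: "rd (rd (ld x1 (m (m x1 x1) (m x1 x2))) x2) x1 = x1" by (metis pc_0_12 pc_0_20 pc_0_37 pc_0_40 pc_0_41)
lemma pc_0_47: "m (ld (m x1 x1) x1) x1 = m x1 (ld (m x1 x1) x1)" by (metis pc_0_20 pc_0_21 pc_0_42 pc_0_43)
lemma pc_0_48: "ld (m x1 (m x2 x1)) (m (m x1 x2) (m x1 (m x1 x2))) = m x1 x2" by (metis pc_0_21 pc_0_39)
lemma pc_0_49: "m x1 (m x1 (ld (m x1 x1) x2)) = ld (m x1 x1) (m x1 (m x1 x2))" by (metis pc_0_14 pc_0_22)
lemma pc_0_50: "ld x1 x1 = e" by (metis pc_0_13 pc_0_44)
lemma pc_0_51: "ld x1 (rd (m x1 x2) x1) = rd x2 x1" by (metis pc_0_13 pc_0_37)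
lemma pc_0_52: "rd x1 x1 = e" by (metis pc_0_20 pc_0_45)
lemma pc_0_53: "rd (ld x1 (m (m x1 x1) (m x1 x2))) x2 = m x1 x1" by (metis pc_0_12 pc_0_46)
lemma pc_0_54: "rd (m x1 (ld (m x1 x1) x1)) x1 = ld (m x1 x1) x1" by (metis pc_0_20 pc_0_47)
lemma pc_0_55: "m x1 (ld (m x1 x1) x1) = e" by (metis pc_0_21 pc_0_39 pc_0_47 pc_0_48 pc_0_49 pc_0_50)
lemma pc_0_56: "rd e x1 = ld x1 e" by (metis pc_0_44 pc_0_51 pc_0_52)
lemma pc_0_57: "ld x1 (m (m x1 x1) (m x1 x2)) = m (m x1 x1) x2" by (metis pc_0_12 pc_0_53)
lemma pc_0_58: "ld (m x1 x1) x1 = ld x1 e" by (metis pc_0_54 pc_0_55 pc_0_56)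
lemma pc_0_59: "ld (ld x1 (m x2 x1)) (ld x1 (m (m x2 x3) x1)) = ld x1 (m x3 x1)" by (metis pc_0_11 pc_0_13)
lemma pc_0_60: "m (m x1 x1) (m x1 x2) = m x1 (m (m x1 x1) x2)" by (metis pc_0_14 pc_0_57)
lemma pc_0_61: "m (m x1 x1) (ld x1 e) = x1" by (metis pc_0_14 pc_0_58)
lemma pc_0_62: "rd x1 e = x1" by (metis pc_0_12 pc_0_44)
lemma pc_0_63: "m (ld (m x1 x2) (m x1 (m x2 x3))) (ld (m x1 x2) (m x1 x4)) = ld (m x1 x2) (m x1 (m x2 (m x3 (ld x2 x4))))" by (metis pc_0_14 pc_0_15)
lemma pc_0_64: "ld (ld x1 (m x2 x1)) (ld x1 (m x3 x1)) = ld x1 (m (ld x2 x3) x1)" by (metis pc_0_14 pc_0_59)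
lemma pc_0_65: "rd (ld x1 (m (m x2 x3) x1)) (ld x1 (m x3 x1)) = ld x1 (m x2 x1)" by (metis pc_0_11 pc_0_20)
lemma pc_0_66: "m (m x1 (m (m x1 x1) x2)) (m x1 x1) = m (m x1 x1) (m (m x1 x2) (m x1 x1))" by (metis pc_0_21 pc_0_60)
lemma pc_0_67: "m (m x1 (m x2 x1)) (ld x1 e) = m x1 (m (m x2 x1) (ld x1 e))" by (metis pc_0_14 pc_0_21 pc_0_35 pc_0_61 pc_0_62)
lemma pc_0_68: "ld (m x1 x2) (m x1 (m x2 (m x1 (ld x2 x3)))) = m x1 (ld (m x1 x2) (m x1 x3))" by (metis pc_0_39 pc_0_63)
lemma pc_0_69: "ld (ld x1 (m x2 x1)) (m x3 x1) = ld x1 (m (ld x2 (m x1 x3)) x1)" by (metis pc_0_13 pc_0_21 pc_0_64)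
lemma pc_0_70: "rd (m (m x1 x2) (m x1 x1)) (m x2 (m x1 x1)) = x1" by (metis pc_0_13 pc_0_21 pc_0_39 pc_0_65 pc_0_66)
lemma pc_0_71: "m (m x1 x2) (ld x1 e) = m x1 (m x2 (ld x1 e))" by (metis pc_0_12 pc_0_67)
lemma pc_0_72: "m (m x1 x2) (m x1 (ld (m x1 x2) (m x1 x3))) = m x1 (m x2 (m x1 (ld x2 x3)))" by (metis pc_0_14 pc_0_68)
lemma pc_0_73: "ld x1 (m (ld (m x1 x2) (m x1 x3)) x1) = ld (m x2 x1) (m x3 x1)" by (metis pc_0_13 pc_0_21 pc_0_69)
lemma pc_0_74: "m (m x1 x2) (m x1 x1) = m x1 (m x2 (m x1 x1))" by (metis pc_0_12 pc_0_70)
lemma pc_0_75: "m x1 (m (ld x1 x2) (ld x1 e)) = m x2 (ld x1 e)" by (metis pc_0_14 pc_0_71)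
lemma pc_0_76: "m (m x1 x2) (m x1 (ld (m x1 x2) x3)) = m x1 (m x2 (m x1 (ld x2 (ld x1 x3))))" by (metis pc_0_14 pc_0_72)
lemma pc_0_77: "m (ld (m x1 x2) (m x1 x3)) x1 = m x1 (ld (m x2 x1) (m x3 x1))" by (metis pc_0_14 pc_0_73)
lemma pc_0_78: "m x1 (m (ld x1 x2) (m x1 x1)) = m x2 (m x1 x1)" by (metis pc_0_14 pc_0_74)
lemma pc_0_79: "m (ld x1 (m x2 x1)) (m x3 x1) = ld x1 (m (m x2 (m x1 x3)) x1)" by (metis pc_0_13 pc_0_26)
lemma pc_0_80: "m (ld x1 e) (m x1 x1) = x1" by (metis pc_0_30 pc_0_39 pc_0_58)
lemma pc_0_81: "ld e x1 = x1" by (metis pc_0_14 pc_0_45)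
lemma pc_0_82: "m (m x1 (ld x2 e)) x2 = m (m x1 x2) (ld x2 e)" by (metis pc_0_14 pc_0_16 pc_0_56 pc_0_75)
lemma pc_0_83: "ld (m x1 x2) (m x1 (m x2 (ld x1 e))) = ld x1 e" by (metis pc_0_13 pc_0_71)
lemma pc_0_84: "m x1 (m x2 (m x1 (ld x2 (ld x1 (m (m x1 x2) x3))))) = m (m x1 x2) (m x1 x3)" by (metis pc_0_13 pc_0_76)
lemma pc_0_85: "ld (ld x1 (m x2 x1)) (ld x1 x3) = ld x1 (m (ld x2 (rd x3 x1)) x1)" by (metis pc_0_12 pc_0_64)
lemma pc_0_86: "m x1 (ld (m x2 x1) (m (m x2 x3) x1)) = ld (m x1 x2) (m x1 (m x2 (m x3 x1)))" by (metis pc_0_13 pc_0_39 pc_0_63 pc_0_77)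
lemma pc_0_87: "m (m x1 (m x2 x2)) x2 = m (m x1 x2) (m x2 x2)" by (metis pc_0_14 pc_0_78 pc_0_79)
lemma pc_0_88: "m (ld x1 e) (m x1 x2) = m x1 (m (ld x1 e) x2)" by (metis pc_0_14 pc_0_30 pc_0_45 pc_0_50 pc_0_63 pc_0_80 pc_0_81)
lemma pc_0_89: "ld (rd x1 x2) x1 = x2" by (metis pc_0_12 pc_0_13)
lemma pc_0_90: "rd (m (m x1 x2) (ld x2 e)) x2 = m x1 (ld x2 e)" by (metis pc_0_20 pc_0_82)
lemma pc_0_91: "ld (m x1 (m x1 x1)) x1 = ld (m x1 x1) e" by (metis pc_0_14 pc_0_21 pc_0_44 pc_0_60 pc_0_83)
lemma pc_0_92: "m (m x1 (m x2 (ld x1 (rd (m (m x1 x2) x3) x2)))) x2 = m (m x1 x2) (m x2 x3)" by (metis pc_0_14 pc_0_79 pc_0_84 pc_0_85)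
lemma pc_0_93: "rd x1 (ld x2 x1) = x2" by (metis pc_0_14 pc_0_20)
lemma pc_0_94: "ld (m x1 x2) (m x1 (m x2 (m x1 (m x1 x1)))) = m x1 (m x1 x1)" by (metis pc_0_13 pc_0_21 pc_0_86 pc_0_87)
lemma pc_0_95: "m x1 (m (ld x1 e) (ld x1 x2)) = m (ld x1 e) x2" by (metis pc_0_14 pc_0_88)
lemma pc_0_96: "ld (ld (m x1 x1) x1) x1 = m x1 x1" by (metis pc_0_43 pc_0_89)
lemma pc_0_97: "m (rd x1 x2) (ld x2 e) = rd (m x1 (ld x2 e)) x2" by (metis pc_0_12 pc_0_90)
lemma pc_0_98: "ld (ld x1 x2) (ld x1 (m x2 x1)) = x1" by (metis pc_0_13 pc_0_30)
lemma pc_0_99: "ld (m x1 (m x1 x2)) (m x1 (m x1 (m x2 x1))) = x1" by (metis pc_0_21 pc_0_39)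
lemma pc_0_100: "m (m x1 (m x1 x1)) (ld (m x1 x1) e) = x1" by (metis pc_0_14 pc_0_91)
lemma pc_0_101: "m (m x1 (m x2 (ld x1 (rd x3 x2)))) x2 = m (m x1 x2) (m x2 (ld (m x1 x2) x3))" by (metis pc_0_14 pc_0_92)
lemma pc_0_102: "ld (ld x1 (m (ld x2 x3) x1)) (ld x1 (m (ld x2 (m x3 x2)) x1)) = ld x1 (m x2 x1)" by (metis pc_0_30 pc_0_59)
lemma pc_0_103: "ld (ld x1 e) e = x1" by (metis pc_0_56 pc_0_93)
lemma pc_0_104: "rd (m x1 (m (m x2 x1) (m x3 x1))) x1 = m (m x1 x2) (m x1 x3)" by (metis pc_0_20 pc_0_29)
lemma pc_0_105: "ld (m x1 x2) (m x1 (m x2 (m x1 (m x1 (m x1 x1))))) = m x1 (m x1 (m x1 x1))" by (metis pc_0_21 pc_0_77 pc_0_86 pc_0_94)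
lemma pc_0_106: "m (m x1 x2) (m x1 (m x1 x1)) = m x1 (m x2 (m x1 (m x1 x1)))" by (metis pc_0_14 pc_0_94)
lemma pc_0_107: "m (ld x1 e) (ld x1 x2) = ld x1 (m (ld x1 e) x2)" by (metis pc_0_13 pc_0_95)
lemma pc_0_108: "ld (ld x1 e) x1 = m x1 x1" by (metis pc_0_58 pc_0_96)
lemma pc_0_109: "m (rd x1 (ld x2 e)) x2 = rd (m x1 x2) (ld x2 e)" by (metis pc_0_56 pc_0_89 pc_0_97)
lemma pc_0_110: "ld (ld (m x1 (m x1 x1)) x1) x1 = m x1 (m x1 x1)" by (metis pc_0_98 pc_0_99)
lemma pc_0_111: "m x1 (ld (m x1 x1) e) = ld x1 e" by (metis pc_0_43 pc_0_58 pc_0_90 pc_0_100)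
lemma pc_0_112: "m (m x1 x2) (m x2 (ld (m x1 x2) (m x3 x2))) = m (m x1 (m x2 (ld x1 x3))) x2" by (metis pc_0_20 pc_0_101)
lemma pc_0_113: "ld (ld x1 (m x2 x1)) e = ld x1 (m (ld x2 e) x1)" by (metis pc_0_45 pc_0_50 pc_0_102 pc_0_103)
lemma pc_0_114: "m (rd (m x1 x2) x1) (m x1 x3) = rd (m x1 (m x2 (m x3 x1))) x1" by (metis pc_0_12 pc_0_37 pc_0_104)
lemma pc_0_115: "m (m x1 x2) (m x1 (m x1 (m x1 x1))) = m x1 (m x2 (m x1 (m x1 (m x1 x1))))" by (metis pc_0_14 pc_0_105)
lemma pc_0_116: "ld (m x1 (m x1 (m x1 x2))) (m x1 (m x1 (m x1 (m x2 x1)))) = x1" by (metis pc_0_21 pc_0_99)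
lemma pc_0_117: "m x1 (m (ld x1 x2) (m x1 (m x1 x1))) = m x2 (m x1 (m x1 x1))" by (metis pc_0_14 pc_0_106)
lemma pc_0_118: "ld (ld x1 e) (m x1 x1) = m x1 (m x1 x1)" by (metis pc_0_103 pc_0_107 pc_0_108)
lemma pc_0_119: "ld (rd x1 (ld x2 e)) (rd (m x1 x2) (ld x2 e)) = x2" by (metis pc_0_13 pc_0_109)
lemma pc_0_120: "m (m x1 (m x1 (m x1 x1))) (ld (m x1 (m x1 x1)) e) = x1" by (metis pc_0_30 pc_0_44 pc_0_45 pc_0_50 pc_0_82 pc_0_106)
lemma pc_0_121: "rd x1 (m x1 (m x1 x1)) = ld (m x1 (m x1 x1)) x1" by (metis pc_0_93 pc_0_110)
lemma pc_0_122: "ld (m x1 x1) e = ld x1 (ld x1 e)" by (metis pc_0_13 pc_0_111)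
lemma pc_0_123: "rd (ld x1 (m (m x2 (m x1 x3)) x1)) (m x3 x1) = ld x1 (m x2 x1)" by (metis pc_0_13 pc_0_21 pc_0_65)
lemma pc_0_124: "m (m x1 x2) (ld (m x2 x1) (m x2 (m x1 (m x3 x2)))) = m (m x1 (m x2 x3)) x2" by (metis pc_0_13 pc_0_86 pc_0_112)
lemma pc_0_125: "ld x1 (m (ld (m x1 x2) e) x1) = ld (m x2 x1) e" by (metis pc_0_13 pc_0_21 pc_0_113)
lemma pc_0_126: "rd (m x1 (m x2 (ld x1 (m x3 x1)))) x1 = m (rd (m x1 x2) x1) x3" by (metis pc_0_14 pc_0_30 pc_0_114)
lemma pc_0_127: "m (m x1 (m x1 (m x1 x1))) (m x1 x2) = m x1 (m (m x1 (m x1 (m x1 x1))) x2)" by (metis pc_0_12 pc_0_23 pc_0_115 pc_0_116)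
lemma pc_0_128: "m (ld x1 x2) (m x1 (m x1 x1)) = ld x1 (m x2 (m x1 (m x1 x1)))" by (metis pc_0_13 pc_0_117)
lemma pc_0_129: "ld (ld x1 e) (m x1 (m x1 x1)) = m x1 (m x1 (m x1 x1))" by (metis pc_0_103 pc_0_107 pc_0_118)
lemma pc_0_130: "ld (m x1 (m x1 x1)) e = ld x1 (ld x1 (ld x1 e))" by (metis pc_0_20 pc_0_91 pc_0_103 pc_0_119 pc_0_120 pc_0_121 pc_0_122)
lemma pc_0_131: "ld (ld x1 (m (rd x2 x3) x1)) (ld x1 (m x2 x1)) = ld x1 (m x3 x1)" by (metis pc_0_12 pc_0_59)
lemma pc_0_132: "rd (ld x1 (m x2 x1)) (m x3 x1) = ld x1 (m (rd x2 (m x1 x3)) x1)" by (metis pc_0_12 pc_0_123)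
lemma pc_0_133: "m (m x1 x2) (ld (m x2 x1) (m x2 (m x1 x3))) = m x2 (m (ld x2 (m x1 x2)) x3)" by (metis pc_0_12 pc_0_23 pc_0_37 pc_0_124)
lemma pc_0_134: "m (ld (m x1 x2) e) x1 = m x1 (ld (m x2 x1) e)" by (metis pc_0_14 pc_0_125)
lemma pc_0_135: "m (m x1 x2) (m x2 (ld (m x1 x2) x2)) = m (m x1 (m x2 (ld x1 e))) x2" by (metis pc_0_52 pc_0_101)
lemma pc_0_136: "rd (m x1 (m x2 (m x1 (m x1 (m x1 x1))))) (m x1 (m x1 (m x1 x1))) = m x1 x2" by (metis pc_0_93 pc_0_105)
lemma pc_0_137: "rd (m x1 (ld x2 (m x3 x2))) x2 = ld x2 (m (rd (m x2 x1) x2) x3)" by (metis pc_0_51 pc_0_126)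
lemma pc_0_138: "m (m x1 (m x1 x1)) (m x1 x2) = m x1 (m (m x1 (m x1 x1)) x2)" by (metis pc_0_12 pc_0_23 pc_0_99 pc_0_106)
lemma pc_0_139: "m x1 (m (m x1 (m x1 (m x1 x1))) (ld x1 x2)) = m (m x1 (m x1 (m x1 x1))) x2" by (metis pc_0_14 pc_0_127)
lemma pc_0_140: "ld (ld x1 x2) (ld x1 (m x2 (m x1 (m x1 x1)))) = m x1 (m x1 x1)" by (metis pc_0_13 pc_0_128)
lemma pc_0_141: "ld (ld x1 e) (m x1 (m x1 (m x1 x1))) = m x1 (m x1 (m x1 (m x1 x1)))" by (metis pc_0_103 pc_0_107 pc_0_129)
lemma pc_0_142: "m (m x1 (m x1 (m x1 x1))) (ld x1 (ld x1 (ld x1 e))) = x1" by (metis pc_0_120 pc_0_130)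
lemma pc_0_143: "ld (ld x1 (m (rd x1 x2) x1)) x1 = ld x1 (m x2 x1)" by (metis pc_0_13 pc_0_131)
lemma pc_0_144: "ld x1 (m (rd (m x1 x2) (m x1 x3)) x1) = rd (m x2 x1) (m x3 x1)" by (metis pc_0_13 pc_0_21 pc_0_132)
lemma pc_0_145: "m (m x1 x2) (ld (m x2 x1) (m x2 x3)) = m x2 (m (ld x2 (m x1 x2)) (ld x1 x3))" by (metis pc_0_14 pc_0_133)
lemma pc_0_146: "rd (m x1 (ld (m x2 x1) e)) x1 = ld (m x1 x2) e" by (metis pc_0_20 pc_0_134)
lemma pc_0_147: "ld (m x1 x2) (m (m x1 (m x2 (ld x1 e))) x2) = m x2 (ld (m x1 x2) x2)" by (metis pc_0_13 pc_0_135)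
lemma pc_0_148: "m x1 (ld (m x1 (m x1 (m x1 x1))) x2) = ld (m x1 (m x1 (m x1 x1))) (m x1 x2)" by (metis pc_0_20 pc_0_21 pc_0_30 pc_0_136 pc_0_137)
lemma pc_0_149: "ld (m x1 (m x1 (m x1 x1))) x1 = ld (m x1 (m x1 x1)) e" by (metis pc_0_14 pc_0_21 pc_0_44 pc_0_83 pc_0_138)
lemma pc_0_150: "m (m x1 (m x1 (m x1 x1))) (ld x1 x2) = ld x1 (m (m x1 (m x1 (m x1 x1))) x2)" by (metis pc_0_13 pc_0_139)
lemma pc_0_151: "ld (m x1 (m x1 (m x1 (m x1 x1)))) (m x1 x1) = ld x1 (ld x1 (ld x1 e))" by (metis pc_0_44 pc_0_107 pc_0_108 pc_0_140 pc_0_141 pc_0_142)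
lemma pc_0_152: "m x1 (m (m x1 x1) (ld x1 x2)) = m (m x1 x1) x2" by (metis pc_0_31 pc_0_57)
lemma pc_0_153: "m x1 (m (m (m x1 x1) (ld x1 x2)) x1) = m (m x1 x1) (m x2 x1)" by (metis pc_0_14 pc_0_30 pc_0_34)
lemma pc_0_154: "m (m x1 x2) (ld x2 (m x3 x2)) = ld x2 (m (m (m x2 x1) x3) x2)" by (metis pc_0_13 pc_0_32)
lemma pc_0_155: "ld (ld x1 (m x2 x1)) x1 = ld x1 (m (ld x2 x1) x1)" by (metis pc_0_93 pc_0_143)
lemma pc_0_156: "m (rd (m x1 x2) (m x1 x3)) x1 = m x1 (rd (m x2 x1) (m x3 x1))" by (metis pc_0_14 pc_0_144)
lemma pc_0_157: "rd (m x1 (m (ld x1 (m x2 x1)) x3)) x1 = m x2 (rd (m x1 x3) x1)" by (metis pc_0_20 pc_0_23)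
lemma pc_0_158: "m x1 (m (ld x1 (m x2 x1)) (ld x2 e)) = m (m x2 x1) (ld (m x1 x2) x1)" by (metis pc_0_44 pc_0_145)
lemma pc_0_159: "rd (m x1 (ld x2 e)) x1 = ld (rd (m x1 x2) x1) e" by (metis pc_0_12 pc_0_37 pc_0_146)
lemma pc_0_160: "m x1 (ld (m x1 (m x1 (m x1 (m x1 x1)))) x1) = ld x1 (ld x1 (ld x1 e))" by (metis pc_0_13 pc_0_14 pc_0_21 pc_0_44 pc_0_67 pc_0_71 pc_0_130 pc_0_147 pc_0_148 pc_0_149 pc_0_150 pc_0_151)
lemma pc_0_161: "m (m x1 x1) (ld x1 x2) = ld x1 (m (m x1 x1) x2)" by (metis pc_0_13 pc_0_152)
lemma pc_0_162: "m (m (m (m x1 x1) x2) x1) x1 = m (m x1 x1) (m (m x2 x1) x1)" by (metis pc_0_14 pc_0_30 pc_0_153 pc_0_154)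
lemma pc_0_163: "m (m (m x1 x1) (rd x2 x1)) x1 = m (m x1 x1) x2" by (metis pc_0_41 pc_0_57)
lemma pc_0_164: "ld x1 (m (ld (m x1 x2) x1) x1) = ld (m x2 x1) x1" by (metis pc_0_13 pc_0_21 pc_0_155)
lemma pc_0_165: "rd (m x1 (rd (m x2 x1) (m x3 x1))) x1 = rd (m x1 x2) (m x1 x3)" by (metis pc_0_20 pc_0_156)
lemma pc_0_166: "ld (rd (m (m x1 x2) x3) (m x2 x3)) (rd (m (m (m x1 x4) x2) x3) (m x2 x3)) = rd (m (m x4 x2) x3) (m x2 x3)" by (metis pc_0_13 pc_0_35)
lemma pc_0_167: "rd (m (m x1 x2) (ld (m x2 x1) x2)) x2 = m x1 (ld (rd (m x2 x1) x2) e)" by (metis pc_0_157 pc_0_158 pc_0_159)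
lemma pc_0_168: "m x1 (m (m x1 x1) (ld (m x1 (m x1 (m x1 (m x1 x1)))) x1)) = ld x1 e" by (metis pc_0_14 pc_0_44 pc_0_50 pc_0_60 pc_0_71 pc_0_160 pc_0_161)
lemma pc_0_169: "m (m (m x1 x1) x2) x1 = m (m x1 x1) (m x2 x1)" by (metis pc_0_12 pc_0_162 pc_0_163)
lemma pc_0_170: "m (ld (m x1 x2) x1) x1 = m x1 (ld (m x2 x1) x1)" by (metis pc_0_14 pc_0_164)
lemma pc_0_171: "rd (ld x1 x2) x1 = ld x1 (rd x2 x1)" by (metis pc_0_14 pc_0_51)
lemma pc_0_172: "ld (ld x1 (ld x1 e)) e = m x1 x1" by (metis pc_0_45 pc_0_50 pc_0_98 pc_0_122)
lemma pc_0_173: "rd (rd (m x1 x2) (m x3 x2)) x2 = ld x2 (rd (m x2 x1) (m x2 x3))" by (metis pc_0_51 pc_0_165)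
lemma pc_0_174: "ld x1 (rd (m (m (m x1 x2) x3) x1) (m x3 x1)) = rd (m (m x2 x3) x1) (m x3 x1)" by (metis pc_0_20 pc_0_21 pc_0_166)
lemma pc_0_175: "ld (ld x1 (m x2 x1)) (m (ld x1 x2) x2) = ld x1 x2" by (metis pc_0_14 pc_0_30 pc_0_39)
lemma pc_0_176: "ld (ld (m x1 x2) (m x1 (m x2 x3))) (ld (m x1 x2) (m x1 (m x2 (m x3 x4)))) = ld (m x1 x2) (m x1 (m x2 x4))" by (metis pc_0_13 pc_0_15)
lemma pc_0_177: "m (m x1 x1) (m (ld (m x1 (m x1 (m x1 (m x1 x1)))) x1) (m x1 x1)) = e" by (metis pc_0_14 pc_0_21 pc_0_30 pc_0_44 pc_0_45 pc_0_50 pc_0_52 pc_0_56 pc_0_71 pc_0_88 pc_0_108 pc_0_160 pc_0_161 pc_0_167 pc_0_168 pc_0_169 pc_0_170 pc_0_171 pc_0_172)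
lemma pc_0_178: "ld x1 (rd (m x1 (m (m x2 x1) x3)) (m x1 x3)) = rd (m (m x2 x3) x1) (m x3 x1)" by (metis pc_0_20 pc_0_21 pc_0_40 pc_0_173)
lemma pc_0_179: "m x1 (rd (m (m x2 x3) x1) (m x3 x1)) = rd (m (m (m x1 x2) x3) x1) (m x3 x1)" by (metis pc_0_14 pc_0_174)
lemma pc_0_180: "ld (ld (m x1 x2) (m x1 (m x2 (m x3 x4)))) (ld (m x1 x2) (m x1 (m x2 (m x3 (m x4 x3))))) = ld (m x1 x2) (m x1 (m x2 x3))" by (metis pc_0_15 pc_0_21 pc_0_175 pc_0_176)
lemma pc_0_181: "m x1 (m x1 (m (ld (m x1 (m x1 (m x1 (m x1 x1)))) x1) (m x1 x1))) = e" by (metis pc_0_22 pc_0_44 pc_0_50 pc_0_177)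
lemma pc_0_182: "m (ld x1 x2) (m x1 x1) = ld x1 (m x2 (m x1 x1))" by (metis pc_0_13 pc_0_78)
lemma pc_0_183: "m (ld x1 (ld x1 e)) (m x1 x1) = e" by (metis pc_0_30 pc_0_44 pc_0_45 pc_0_50 pc_0_107 pc_0_108 pc_0_161)
lemma pc_0_184: "m (rd (rd (m x1 x2) x1) (m x1 x3)) x1 = m x1 (rd x2 (m x3 x1))" by (metis pc_0_12 pc_0_37 pc_0_156)
lemma pc_0_185: "rd (m (m (m x1 x2) x3) x1) (m x3 x1) = rd (m x1 (m (m x2 x1) x3)) (m x1 x3)" by (metis pc_0_14 pc_0_178 pc_0_179)
lemma pc_0_186: "ld (m x1 x2) (m x1 (m x2 x2)) = ld (ld (m x1 x2) x1) e" by (metis pc_0_14 pc_0_21 pc_0_44 pc_0_50 pc_0_87 pc_0_160 pc_0_170 pc_0_180 pc_0_181 pc_0_182 pc_0_183)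
lemma pc_0_187: "rd (m x1 (rd x2 (m x3 x1))) x1 = rd (rd (m x1 x2) x1) (m x1 x3)" by (metis pc_0_20 pc_0_184)
lemma pc_0_188: "m x1 (rd (m (m x2 x3) x1) (m x3 x1)) = rd (m x1 (m (m x2 x1) x3)) (m x1 x3)" by (metis pc_0_179 pc_0_185)
lemma pc_0_189: "m (m x1 x2) (ld (ld (m x1 x2) x1) e) = m x1 (m x2 x2)" by (metis pc_0_14 pc_0_186)
lemma pc_0_190: "ld (rd (m (m x1 x2) x3) (m x2 x3)) (rd (m (m x4 x2) x3) (m x2 x3)) = rd (m (m (ld x1 x4) x2) x3) (m x2 x3)" by (metis pc_0_14 pc_0_166)
lemma pc_0_191: "rd (m x1 (ld (m x2 x1) x1)) x1 = ld (m x1 x2) x1" by (metis pc_0_20 pc_0_170)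
lemma pc_0_192: "rd (rd (m x1 (m (m x2 x1) x3)) (m x1 x3)) x1 = rd (m x1 (m x2 x3)) (m x1 x3)" by (metis pc_0_24 pc_0_187 pc_0_188)
lemma pc_0_193: "rd (m x1 (m (ld x1 (m x2 x1)) x3)) (m x1 x3) = rd (m (m x2 x3) x1) (m x3 x1)" by (metis pc_0_14 pc_0_30 pc_0_185)
lemma pc_0_194: "m x1 (m (ld x1 x2) (ld x1 x2)) = m x2 (ld (ld x2 x1) e)" by (metis pc_0_14 pc_0_189)
lemma pc_0_195: "rd (m (m (ld x1 x2) x3) x2) (m x3 x2) = ld (rd (m (m x1 x3) x2) (m x3 x2)) x2" by (metis pc_0_20 pc_0_21 pc_0_190)
lemma pc_0_196: "rd (m x1 (ld x2 x1)) x1 = ld (rd (m x1 x2) x1) x1" by (metis pc_0_12 pc_0_37 pc_0_191)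
lemma pc_0_197: "rd (rd (m x1 (m x2 x3)) (m x1 x3)) x1 = rd (m x1 (m (rd x2 x1) x3)) (m x1 x3)" by (metis pc_0_12 pc_0_192)
lemma pc_0_198: "m (rd (m (m x1 x2) x3) (m x2 x3)) (m x3 x2) = m x3 (m (ld x3 (m x1 x3)) x2)" by (metis pc_0_12 pc_0_193)
lemma pc_0_199: "m (m x1 x2) (ld (ld (m x1 x2) x2) e) = m (m x1 x1) x2" by (metis pc_0_14 pc_0_16 pc_0_20 pc_0_194)
lemma pc_0_200: "ld x1 (ld (m x1 x2) (m x1 (m x2 (m x1 x3)))) = ld (m x1 x2) (m x1 (m x2 x3))" by (metis pc_0_39 pc_0_176)
lemma pc_0_201: "rd (m x1 (m (ld x2 x1) x3)) (m x1 x3) = ld (rd (m x1 (m x2 x3)) (m x1 x3)) x1" by (metis pc_0_20 pc_0_24 pc_0_179 pc_0_185 pc_0_187 pc_0_195 pc_0_196 pc_0_197)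
lemma pc_0_202: "m (rd (m x1 x2) (m x3 x2)) (m x2 x3) = m x2 (m (ld x2 (m (rd x1 x3) x2)) x3)" by (metis pc_0_12 pc_0_198)
lemma pc_0_203: "ld x1 (m (m (rd x2 x1) (m x1 x3)) x1) = m (ld x1 x2) (m x3 x1)" by (metis pc_0_12 pc_0_79)
lemma pc_0_204: "rd (m (m x1 x1) x2) (m x1 x2) = ld (rd x2 (m x1 x2)) e" by (metis pc_0_14 pc_0_159 pc_0_199)
lemma pc_0_205: "m x1 (ld (m x1 x2) (m x1 (m x2 x3))) = ld (m x1 x2) (m x1 (m x2 (m x1 x3)))" by (metis pc_0_14 pc_0_200)
lemma pc_0_206: "m (ld (rd (m x1 (m x2 x3)) (m x1 x3)) x1) (m x1 x3) = m x1 (m (ld x2 x1) x3)" by (metis pc_0_12 pc_0_201)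
lemma pc_0_207: "m x1 (m (ld x1 (m (ld x2 e) x1)) x2) = m (rd x1 (m x2 x1)) (m x1 x2)" by (metis pc_0_45 pc_0_56 pc_0_202)
lemma pc_0_208: "m (m (rd x1 x2) (m x2 x3)) x2 = m x2 (m (ld x2 x1) (m x3 x2))" by (metis pc_0_14 pc_0_203)
lemma pc_0_209: "rd (m (m (m x1 x2) x2) x1) (m x2 x1) = m x1 (ld (rd x1 (m x2 x1)) e)" by (metis pc_0_179 pc_0_204)
lemma pc_0_210: "ld x1 (m x2 (m (ld x2 x1) x1)) = m x2 (ld (ld x1 x2) e)" by (metis pc_0_13 pc_0_14 pc_0_194 pc_0_205)
lemma pc_0_211: "m x1 (m (ld x1 (m (ld (ld x2 e) x1) x1)) x2) = m (m x2 x1) (m x1 x2)" by (metis pc_0_20 pc_0_89 pc_0_155 pc_0_206 pc_0_207)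
lemma pc_0_212: "m (m (rd (m x1 x2) x1) x3) x1 = m x1 (m x2 (ld x1 (m x3 x1)))" by (metis pc_0_12 pc_0_126)
lemma pc_0_213: "m x1 (m (ld x1 x2) (ld x1 (m x3 x1))) = m (m (rd x2 x1) x3) x1" by (metis pc_0_14 pc_0_30 pc_0_208)
lemma pc_0_214: "ld (ld (m x1 x2) (m x1 (m x2 x3))) (ld (m x1 x2) (m x1 (m x2 x4))) = ld (m x1 x2) (m x1 (m x2 (ld x3 x4)))" by (metis pc_0_14 pc_0_176)
lemma pc_0_215: "m (m x1 x2) (rd (m x1 x3) x1) = rd (m x1 (m (m x2 x1) x3)) x1" by (metis pc_0_12 pc_0_37 pc_0_104)
lemma pc_0_216: "rd (m x1 (m x2 (m x1 x2))) (m x1 x2) = m x1 (ld (rd x1 (m x2 x1)) e)" by (metis pc_0_21 pc_0_185 pc_0_209)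
lemma pc_0_217: "rd x1 (ld x1 (m x2 x1)) = ld x1 (m (rd x1 x2) x1)" by (metis pc_0_93 pc_0_143)
lemma pc_0_218: "m x1 (m x2 (ld (ld x1 x2) e)) = m x2 (m (ld x2 x1) x1)" by (metis pc_0_14 pc_0_210)
lemma pc_0_219: "m (ld x1 (m (ld (ld x2 e) x1) x1)) x2 = ld x1 (m (m x2 x1) (m x1 x2))" by (metis pc_0_13 pc_0_211)
lemma pc_0_220: "rd (m x1 (m x2 (ld x1 (m x3 x1)))) (m x3 x1) = rd (m x1 (m x2 x3)) (m x1 x3)" by (metis pc_0_12 pc_0_37 pc_0_185 pc_0_212)
lemma pc_0_221: "m (ld x1 x2) (ld x1 (m x3 x1)) = ld x1 (m (m (rd x2 x1) x3) x1)" by (metis pc_0_13 pc_0_213)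
lemma pc_0_222: "rd (m (m (rd x1 x2) x3) x2) (m x3 x2) = ld x2 (rd (m x2 (m x1 x3)) (m x2 x3))" by (metis pc_0_12 pc_0_178)
lemma pc_0_223: "ld (ld (m x1 x2) (m x1 (m x2 x3))) x1 = ld (m x1 x2) (m x1 (m x2 (ld x3 x1)))" by (metis pc_0_39 pc_0_214)
lemma pc_0_224: "rd (m x1 (m (m x2 x1) (ld x1 x3))) x1 = m (m x1 x2) (rd x3 x1)" by (metis pc_0_14 pc_0_215)
lemma pc_0_225: "rd (m (m x1 x2) (m x3 x2)) x2 = ld x2 (m (m x2 x1) (m x2 x3))" by (metis pc_0_51 pc_0_104)
lemma pc_0_226: "rd (m x1 (m (ld x1 x2) x2)) x2 = m (ld (rd x1 x2) e) x1" by (metis pc_0_14 pc_0_30 pc_0_113 pc_0_216 pc_0_217)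
lemma pc_0_227: "m (m x1 x2) (m x1 (ld (m x2 x1) x1)) = m x1 (m (m x1 x2) (ld x2 e))" by (metis pc_0_13 pc_0_170 pc_0_218)
lemma pc_0_228: "m (rd (m (m x1 (rd x2 x3)) x3) x2) (rd (m (m x4 (rd x2 x3)) x3) x2) = rd (m (m (m x1 x4) (rd x2 x3)) x3) x2" by (metis pc_0_12 pc_0_35)
lemma pc_0_229: "m (ld (ld x1 e) x2) (rd (m x2 x1) x2) = rd (m (m x1 x2) (m x2 x1)) x2" by (metis pc_0_14 pc_0_157 pc_0_219)
lemma pc_0_230: "rd (m x1 (m (ld x1 x2) x3)) (m x1 x3) = ld x1 (rd (m x1 (m x2 x3)) (m x1 x3))" by (metis pc_0_14 pc_0_220 pc_0_221 pc_0_222)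
lemma pc_0_231: "ld (ld (ld x1 x2) e) x2 = ld x1 (m x2 x2)" by (metis pc_0_13 pc_0_14 pc_0_194 pc_0_223)
lemma pc_0_232: "rd (m (m x1 x2) (ld x2 x3)) x2 = ld x2 (m (m x2 x1) (rd x3 x2))" by (metis pc_0_51 pc_0_224)
lemma pc_0_233: "m (m x1 x2) (ld x2 e) = m x2 (m (ld x2 e) x1)" by (metis pc_0_13 pc_0_20 pc_0_88 pc_0_225 pc_0_226 pc_0_227)
lemma pc_0_234: "rd (m (m (m x1 (ld (ld x2 e) x3)) x2) x3) (m x2 x3) = m (m x1 x2) x3" by (metis pc_0_12 pc_0_20 pc_0_23 pc_0_178 pc_0_193 pc_0_228 pc_0_229 pc_0_230)
lemma pc_0_235: "m (ld (ld x1 x2) e) (ld x1 (m x2 x2)) = x2" by (metis pc_0_14 pc_0_231)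
lemma pc_0_236: "rd (m x1 (m (ld x1 e) x2)) x1 = m x2 (ld x1 e)" by (metis pc_0_13 pc_0_56 pc_0_71 pc_0_232 pc_0_233)
lemma pc_0_237: "rd (m x1 (m x2 (m x1 x1))) (m x1 x1) = m x1 x2" by (metis pc_0_20 pc_0_74)
lemma pc_0_238: "m (m (ld (ld (ld x1 e) x2) e) x1) (m x2 x2) = x2" by (metis pc_0_20 pc_0_74 pc_0_234 pc_0_235)
lemma pc_0_239: "rd (m x1 (m (m (ld x1 e) x2) (m x3 x1))) x1 = m (m x2 (ld x1 e)) (m x1 x3)" by (metis pc_0_114 pc_0_236)
lemma pc_0_240: "m x1 (m (ld (ld (ld x2 e) x1) e) x2) = e" by (metis pc_0_52 pc_0_237 pc_0_238)
lemma pc_0_241: "m (m x1 (ld x2 e)) (m x2 (ld x1 e)) = e" by (metis pc_0_13 pc_0_44 pc_0_52 pc_0_239 pc_0_240)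
lemma pc_0_242: "ld (m x1 x2) (m x1 (m x2 (m (ld x2 x3) x1))) = m x1 (ld (m x2 x1) (m x3 x1))" by (metis pc_0_14 pc_0_86)
lemma pc_0_243: "m (m (ld x1 e) x2) x1 = m (ld x1 e) (m x2 x1)" by (metis pc_0_56 pc_0_71 pc_0_89)
lemma pc_0_244: "ld (m x1 (ld x2 e)) e = m x2 (ld x1 e)" by (metis pc_0_13 pc_0_241)
lemma pc_0_245: "m (ld x1 x2) (ld x1 e) = ld x1 (m x2 (ld x1 e))" by (metis pc_0_13 pc_0_75)
lemma pc_0_246: "m (m x1 x2) (m x1 (ld (m x2 x1) (m x3 x1))) = m x1 (m x2 (m (ld x2 x3) x1))" by (metis pc_0_14 pc_0_242)
lemma pc_0_247: "rd x1 (m x1 x1) = ld x1 e" by (metis pc_0_43 pc_0_58)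
lemma pc_0_248: "ld (ld (m x1 x2) (m x1 (m x2 x3))) e = ld (m x1 x2) (m x1 (m x2 (ld x3 e)))" by (metis pc_0_13 pc_0_58 pc_0_63 pc_0_214)
lemma pc_0_249: "rd (m (ld x1 e) (m x2 x1)) x1 = m (ld x1 e) x2" by (metis pc_0_20 pc_0_243)
lemma pc_0_250: "ld (rd x1 x2) (m x1 x1) = ld (ld x2 e) x1" by (metis pc_0_89 pc_0_231)
lemma pc_0_251: "rd (m (ld x1 e) x2) x1 = ld x1 (m x2 (ld x1 e))" by (metis pc_0_51 pc_0_236)
lemma pc_0_252: "ld (m x1 x2) (m x1 (ld (m x1 x2) e)) = ld (m x1 (m x2 x2)) e" by (metis pc_0_189 pc_0_244 pc_0_245)
lemma pc_0_253: "m (m x1 (ld x2 e)) x2 = m x2 (m (ld x2 e) x1)" by (metis pc_0_82 pc_0_233)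
lemma pc_0_254: "m (m x1 x2) (m x1 (ld (m x2 x1) x3)) = m x1 (m x2 (m (ld x2 (rd x3 x1)) x1))" by (metis pc_0_12 pc_0_246)
lemma pc_0_255: "m (ld (ld (ld x1 e) x2) e) x1 = ld x2 e" by (metis pc_0_20 pc_0_238 pc_0_247)
lemma pc_0_256: "m x1 (m (ld x1 e) (ld x2 e)) = ld (m x1 (m (ld x1 e) x2)) e" by (metis pc_0_30 pc_0_45 pc_0_50 pc_0_81 pc_0_88 pc_0_248)
lemma pc_0_257: "m (ld x1 e) (rd x2 x1) = rd (m (ld x1 e) x2) x1" by (metis pc_0_12 pc_0_249)
lemma pc_0_258: "rd (ld x1 (m x2 (ld x1 e))) (ld x1 e) = ld x1 x2" by (metis pc_0_20 pc_0_245)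
lemma pc_0_259: "m (ld a e) (m a (m b b)) = m (m a b) (m (ld a e) b)" by (fact h)
lemma pc_0_260: "m (rd x1 x2) (ld (ld x2 e) x1) = m x1 x1" by (metis pc_0_14 pc_0_250)
lemma pc_0_261: "rd (m x1 x2) (ld x1 e) = ld (ld x1 e) (m x2 x1)" by (metis pc_0_56 pc_0_89 pc_0_251)
lemma pc_0_262: "m (ld (m x1 (m x2 x2)) e) (m x1 x2) = m x1 (ld (m x2 x1) e)" by (metis pc_0_30 pc_0_45 pc_0_50 pc_0_56 pc_0_134 pc_0_242 pc_0_252 pc_0_253 pc_0_254)
lemma pc_0_263: "m (ld x1 e) (ld x2 e) = ld (m x2 x1) e" by (metis pc_0_14 pc_0_233 pc_0_255 pc_0_256)
lemma pc_0_264: "ld (m (ld x1 e) x2) e = m (ld x2 e) x1" by (metis pc_0_14 pc_0_103 pc_0_107 pc_0_253 pc_0_255 pc_0_256)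
lemma pc_0_265: "m (m x1 x2) (ld (m x1 (m x2 x2)) e) = m x1 (ld (m x1 x2) e)" by (metis pc_0_14 pc_0_252)
lemma pc_0_266: "m (ld x1 e) (rd x2 x1) = ld x1 (m x2 (ld x1 e))" by (metis pc_0_251 pc_0_257)
lemma pc_0_267: "rd (ld x1 x2) (ld x1 e) = ld x1 (rd x2 (ld x1 e))" by (metis pc_0_12 pc_0_258)
lemma pc_0_268: "ld (m a b) (m (ld a e) (m a (m b b))) = m (ld a e) b" by (metis pc_0_13 pc_0_259)
lemma pc_0_269: "m (ld (ld x1 e) (m x2 x1)) x2 = m (m x1 x2) (m x1 x2)" by (metis pc_0_13 pc_0_103 pc_0_260 pc_0_261)
lemma pc_0_270: "m (m (m x1 x1) x2) (ld (m x1 x2) e) = m x2 (m (ld x2 e) x1)" by (metis pc_0_45 pc_0_88 pc_0_103 pc_0_172 pc_0_244 pc_0_245 pc_0_262 pc_0_263 pc_0_264)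
lemma pc_0_271: "ld (m x1 x2) (m x2 (m (ld x2 e) x1)) = ld x2 e" by (metis pc_0_13 pc_0_233)
lemma pc_0_272: "m (ld (m x1 x2) e) (m (m x1 x1) x2) = m (ld x2 e) (m x1 x2)" by (metis pc_0_45 pc_0_103 pc_0_172 pc_0_245 pc_0_263 pc_0_264 pc_0_265)
lemma pc_0_273: "m (m (ld x1 e) x2) (m (ld x1 e) x2) = m (ld x1 (m x2 (ld x1 e))) x2" by (metis pc_0_20 pc_0_104 pc_0_126 pc_0_260 pc_0_266 pc_0_267)
lemma pc_0_274: "ld (m a b) (m a (m (ld a e) (m b b))) = m (ld a e) b" by (metis pc_0_88 pc_0_268)
lemma pc_0_275: "m (m (ld x1 e) x2) (m x2 x1) = m (ld x1 e) (m (m x2 x2) x1)" by (metis pc_0_13 pc_0_103 pc_0_233 pc_0_269 pc_0_270 pc_0_271 pc_0_272 pc_0_273)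
lemma pc_0_276: "rd (m x1 (m (ld x1 x2) (m x3 x1))) x1 = m (rd x2 x1) (m x1 x3)" by (metis pc_0_14 pc_0_114)
lemma pc_0_277: "ld (ld (ld x1 e) x2) e = rd (ld x2 e) x1" by (metis pc_0_20 pc_0_255)
lemma pc_0_278: "m a (m (ld a (m b a)) (ld b (m (ld a e) (m b b)))) = m (m b a) (m (ld a e) b)" by (metis pc_0_145 pc_0_274)
lemma pc_0_279: "m (m x1 (ld x2 e)) (m x2 x1) = m x2 (m (ld x2 e) (m x1 x1))" by (metis pc_0_56 pc_0_88 pc_0_239 pc_0_275 pc_0_276)
lemma pc_0_280: "ld (rd (ld x1 e) x2) x1 = ld (ld x2 e) (m x1 x1)" by (metis pc_0_231 pc_0_277)
lemma pc_0_281: "m (ld a (m b a)) (ld b (m (ld a e) (m b b))) = ld a (m (m b a) (m (ld a e) b))" by (metis pc_0_13 pc_0_278)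
lemma pc_0_282: "m (m x1 x2) (m (ld x2 e) x1) = m x2 (m (ld x2 e) (m x1 x1))" by (metis pc_0_44 pc_0_50 pc_0_56 pc_0_88 pc_0_103 pc_0_279 pc_0_280)
lemma pc_0_283: "m (ld a (m b a)) (ld b (m (ld a e) (m b b))) = m (ld a e) (m b b)" by (metis pc_0_13 pc_0_281 pc_0_282)
lemma pc_0_285: "ld a (m b a) = b" by (metis pc_0_20 pc_0_93 pc_0_283)
lemma goal: "m a b = m b a" by (metis pc_0_14 pc_0_285)
end

locale aloop2 = aloop +
  fixes a b
  assumes h: "m (ld a e) (m a (m b b)) = m (m (ld a e) b) (m a b)"
begin
lemma qf2: "m x0 (ld x0 x1) = x1" by (fact a2)
lemma qf7: "ld x0 (m (m x1 x2) x0) = m (ld x0 (m x1 x0)) (ld x0 (m x2 x0))" by (fact t)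
lemma qf1: "ld x0 (m x0 x1) = x1" by (fact a1)
lemma qf48: "ld x0 (m (m x0 x1) x0) = m x0 (ld x0 (m x1 x0))" by (metis qf7 qf1)
lemma qf66: "m x1 x0 = ld x0 (m (m x0 x1) x0)" by (metis qf48 qf2)
lemma qf82: "m (ld x1 x2) x1 = ld x1 (m x2 x1)" by (metis qf66 qf2)
lemma qf147: "m x4 x3 = m x3 (m (ld x3 x4) x3)" by (metis qf2 qf82)
lemma qf3: "rd (m x0 x1) x1 = x0" by (fact a3)
lemma qf92: "m (m x8 x9) x8 = m x8 (m x9 x8)" by (metis qf2 qf66)
lemma qf187: "m x3 x4 = rd (m x3 (m x4 x3)) x3" by (metis qf3 qf92)
lemma qf4: "m (rd x0 x1) x1 = x0" by (fact a4)
lemma qf272: "m x11 (rd x10 x11) = rd (m x11 x10) x11" by (metis qf187 qf4)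
lemma qf10: "m (ld a e) (m a (m b b)) = m (m (ld a e) b) (m a b)" by (fact h)
lemma qf40: "m (ld a e) b = rd (m (ld a e) (m a (m b b))) (m a b)" by (metis qf3 qf10)
lemma qf8: "ld (m x1 x0) (m x1 (m x0 (m x2 x3))) = m (ld (m x1 x0) (m x1 (m x0 x2))) (ld (m x1 x0) (m x1 (m x0 x3)))" by (fact l)
lemma qf633: "ld (m x5 x3) (m x5 (m x3 (m x6 (ld x3 x4)))) = m (ld (m x5 x3) (m x5 (m x3 x6))) (ld (m x5 x3) (m x5 x4))" by (metis qf8 qf2)
lemma qf188: "ld (m x5 x6) (m x5 (m x6 x5)) = x5" by (metis qf1 qf92)
lemma qf310: "m (ld (m x2 x2) x2) (m x2 x2) = x2" by (metis qf188 qf82)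
lemma qf5091: "ld (m (ld (m x19 x19) x19) x19) (m (ld (m x19 x19) x19) (m x19 (m x19 (ld x19 x20)))) = m (ld (m (ld (m x19 x19) x19) x19) x19) (ld (m (ld (m x19 x19) x19) x19) (m (ld (m x19 x19) x19) x20))" by (metis qf633 qf310)
lemma qf578: "m (ld (m x9 x9) x9) (m (m x9 x9) (ld (m x9 x9) x9)) = m x9 (ld (m x9 x9) x9)" by (metis qf92 qf310)
lemma qf585: "m x9 (ld (m x9 x9) x9) = m (ld (m x9 x9) x9) x9" by (metis qf578 qf2)
lemma qf5230: "ld (m x19 (ld (m x19 x19) x19)) (m (ld (m x19 x19) x19) (m x19 (m x19 (ld x19 x20)))) = m (ld (m x19 (ld (m x19 x19) x19)) x19) (ld (m x19 (ld (m x19 x19) x19)) (m (ld (m x19 x19) x19) x20))" by (metis qf5091 qf585)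
lemma qf5231: "m (ld (m x19 (ld (m x19 x19) x19)) x19) (ld (m x19 (ld (m x19 x19) x19)) (m (ld (m x19 x19) x19) x20)) = ld (m x19 (ld (m x19 x19) x19)) (m (ld (m x19 x19) x19) (m x19 x20))" by (metis qf5230 qf2)
lemma qf576: "ld (m x7 x7) x7 = rd x7 (m x7 x7)" by (metis qf3 qf310)
lemma qf58: "ld x0 (m x1 x0) = rd (ld x0 (m (m x1 x2) x0)) (ld x0 (m x2 x0))" by (metis qf3 qf7)
lemma qf101: "rd (ld x0 (m (m x1 x2) x0)) (ld x0 (m x2 x0)) = m (ld x0 x1) x0" by (metis qf58 qf82)
lemma qf117: "m (ld x0 x1) x0 = rd (ld x0 (m (m x1 x2) x0)) (m (ld x0 x2) x0)" by (metis qf101 qf82)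
lemma qf118: "m (ld x0 x1) x0 = rd (m (ld x0 (m x1 x2)) x0) (m (ld x0 x2) x0)" by (metis qf117 qf82)
lemma qf5: "m e x0 = x0" by (fact a5)
lemma qf142: "m (ld x5 e) x5 = ld x5 x5" by (metis qf82 qf5)
lemma qf6: "m x0 e = x0" by (fact a6)
lemma qf15: "e = ld x1 x1" by (metis qf1 qf6)
lemma qf151: "e = m (ld x5 e) x5" by (metis qf142 qf15)
lemma qf2062: "m (ld x23 (ld x22 e)) x23 = rd (m (ld x23 e) x23) (m (ld x23 x22) x23)" by (metis qf118 qf151)
lemma qf2133: "m (ld x23 (ld x22 e)) x23 = rd e (m (ld x23 x22) x23)" by (metis qf2062 qf151)
lemma qf2845: "rd e x6 = m (ld (m x6 x6) (ld x6 e)) (m x6 x6)" by (metis qf2133 qf310)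
lemma qf160: "ld x1 e = rd e x1" by (metis qf3 qf151)
lemma qf2908: "ld x6 e = m (ld (m x6 x6) (ld x6 e)) (m x6 x6)" by (metis qf2845 qf160)
lemma qf8587: "m (m x71 x71) (ld (m x71 x71) (ld x71 e)) = rd (m (m x71 x71) (ld x71 e)) (m x71 x71)" by (metis qf187 qf2908)
lemma qf8660: "ld x71 e = rd (m (m x71 x71) (ld x71 e)) (m x71 x71)" by (metis qf8587 qf2)
lemma qf159: "ld x0 e = m (ld x0 (ld x0 e)) x0" by (metis qf82 qf151)
lemma qf161: "ld (ld x2 e) e = x2" by (metis qf1 qf151)
lemma qf398: "m (ld (ld x0 e) x0) (ld x0 e) = x0" by (metis qf159 qf161)
lemma qf141: "m (ld x4 (rd x3 x4)) x4 = ld x4 x3" by (metis qf82 qf4)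
lemma qf203: "ld x5 (rd x6 x5) = rd (ld x5 x6) x5" by (metis qf3 qf141)
lemma qf431: "ld (ld x7 e) (rd e (ld x7 e)) = rd x7 (ld x7 e)" by (metis qf203 qf161)
lemma qf24: "rd x3 (ld x2 x3) = x2" by (metis qf3 qf2)
lemma qf442: "rd x7 (ld x7 e) = ld (ld x7 e) x7" by (metis qf431 qf24)
lemma qf146: "rd (m x2 x1) (m (ld x1 x2) x1) = x1" by (metis qf24 qf82)
lemma qf8552: "m x10 x10 = rd (m (ld x10 e) (m x10 x10)) (ld x10 e)" by (metis qf146 qf2908)
lemma qf269: "m x5 (m x5 x6) = rd (m x5 (m x5 (m x6 x5))) x5" by (metis qf187 qf92)
lemma qf51: "ld (ld x2 x3) (m (m x4 x2) (ld x2 x3)) = m (ld (ld x2 x3) (m x4 (ld x2 x3))) (ld (ld x2 x3) x3)" by (metis qf7 qf2)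
lemma qf105: "ld (ld x2 x3) (m (m x4 x2) (ld x2 x3)) = m (m (ld (ld x2 x3) x4) (ld x2 x3)) (ld (ld x2 x3) x3)" by (metis qf51 qf82)
lemma qf123: "m (m (ld (ld x2 x3) x4) (ld x2 x3)) (ld (ld x2 x3) x3) = m (ld (ld x2 x3) (m x4 x2)) (ld x2 x3)" by (metis qf105 qf82)
lemma qf3486: "m (ld (ld x0 e) (m x0 x0)) (ld x0 e) = m x0 (ld (ld x0 e) e)" by (metis qf123 qf398)
lemma qf3568: "m x0 x0 = m (ld (ld x0 e) (m x0 x0)) (ld x0 e)" by (metis qf3486 qf161)
lemma qf17074: "m (ld x88 e) (m (ld x88 e) (ld (ld x88 e) (m x88 x88))) = rd (m (ld x88 e) (m (ld x88 e) (m x88 x88))) (ld x88 e)" by (metis qf269 qf3568)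
lemma qf17194: "m (ld x88 e) (m x88 x88) = rd (m (ld x88 e) (m (ld x88 e) (m x88 x88))) (ld x88 e)" by (metis qf17074 qf2)
lemma qf595: "ld (m x5 x3) (m x5 (m x3 (m (ld x3 x4) x6))) = m (ld (m x5 x3) (m x5 x4)) (ld (m x5 x3) (m x5 (m x3 x6)))" by (metis qf8 qf2)
lemma qf3941: "ld (m x0 x1) (m x0 (m x1 (m (ld x1 e) x2))) = m (ld (m x0 x1) x0) (ld (m x0 x1) (m x0 (m x1 x2)))" by (metis qf595 qf6)
lemma qf113716: "ld e (m (ld x182 e) (m x182 (m (ld x182 e) x183))) = m (ld e (ld x182 e)) (ld e (m (ld x182 e) (m x182 x183)))" by (metis qf3941 qf151)
lemma qf14: "ld e x0 = x0" by (metis qf1 qf5)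
lemma qf114272: "ld e (m (ld x182 e) (m x182 (m (ld x182 e) x183))) = m (ld e (ld x182 e)) (m (ld x182 e) (m x182 x183))" by (metis qf113716 qf14)
lemma qf114273: "ld e (m (ld x182 e) (m x182 (m (ld x182 e) x183))) = m (ld x182 e) (m (ld x182 e) (m x182 x183))" by (metis qf114272 qf14)
lemma qf114274: "m (ld x182 e) (m x182 (m (ld x182 e) x183)) = m (ld x182 e) (m (ld x182 e) (m x182 x183))" by (metis qf114273 qf14)
lemma qf114275: "m (ld x88 e) (m x88 x88) = rd (m (ld x88 e) (m x88 (m (ld x88 e) x88))) (ld x88 e)" by (metis qf17194 qf114274)
lemma qf114288: "m (ld x88 e) (m x88 x88) = rd (m (ld x88 e) (m e x88)) (ld x88 e)" by (metis qf114275 qf147)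
lemma qf114289: "m (ld x88 e) (m x88 x88) = rd (m (ld x88 e) x88) (ld x88 e)" by (metis qf114288 qf5)
lemma qf114290: "m (ld x88 e) (m x88 x88) = rd e (ld x88 e)" by (metis qf114289 qf151)
lemma qf114291: "m (ld x88 e) (m x88 x88) = x88" by (metis qf114290 qf24)
lemma qf114292: "rd x10 (ld x10 e) = m x10 x10" by (metis qf8552 qf114291)
lemma qf114559: "ld (ld x7 e) x7 = m x7 x7" by (metis qf442 qf114292)
lemma qf114560: "m (m x0 x0) (ld x0 e) = x0" by (metis qf398 qf114559)
lemma qf115476: "ld x71 e = rd x71 (m x71 x71)" by (metis qf8660 qf114560)
lemma qf115713: "ld x7 e = ld (m x7 x7) x7" by (metis qf576 qf115476)
lemma qf115761: "m (ld (m x19 (ld x19 e)) x19) (ld (m x19 (ld x19 e)) (m (ld x19 e) x20)) = ld (m x19 (ld x19 e)) (m (ld x19 e) (m x19 x20))" by (metis qf5231 qf115713)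
lemma qf117151: "m (ld e x19) (ld e (m (ld x19 e) x20)) = ld e (m (ld x19 e) (m x19 x20))" by (metis qf115761 qf2)
lemma qf117152: "m (ld x19 e) (m x19 x20) = m (ld e x19) (ld e (m (ld x19 e) x20))" by (metis qf117151 qf14)
lemma qf117153: "m (ld x19 e) (m x19 x20) = m (ld e x19) (m (ld x19 e) x20)" by (metis qf117152 qf14)
lemma qf117154: "m x19 (m (ld x19 e) x20) = m (ld x19 e) (m x19 x20)" by (metis qf117153 qf14)
lemma qf117199: "m (ld a e) b = rd (m a (m (ld a e) (m b b))) (m a b)" by (metis qf40 qf117154)
lemma qf95: "ld x0 (m (m x1 x2) x0) = m (m (ld x0 x1) x0) (ld x0 (m x2 x0))" by (metis qf7 qf82)
lemma qf107: "ld x0 (m (m x1 x2) x0) = m (m (ld x0 x1) x0) (m (ld x0 x2) x0)" by (metis qf95 qf82)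
lemma qf108: "m (m (ld x0 x1) x0) (m (ld x0 x2) x0) = m (ld x0 (m x1 x2)) x0" by (metis qf107 qf82)
lemma qf344: "m (m (ld x0 x2) x0) (m x1 x0) = m (ld x0 (m x2 (m x0 x1))) x0" by (metis qf108 qf1)
lemma qf3252: "m (m (ld (ld x4 x6) (m (ld x4 x5) x4)) (ld x4 x6)) (m x4 (ld x4 x6)) = m (ld (ld x4 x6) (m (ld x4 (m x5 x6)) x4)) (ld x4 x6)" by (metis qf344 qf108)
lemma qf3335: "m (ld (ld x4 x6) (m (ld x4 (m x5 x6)) x4)) (ld x4 x6) = m (m (ld (ld x4 x6) (m (ld x4 x5) x4)) (ld x4 x6)) x6" by (metis qf3252 qf2)
lemma qf46: "ld x11 (m (m (rd x10 x11) x12) x11) = m (ld x11 x10) (ld x11 (m x12 x11))" by (metis qf7 qf4)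
lemma qf97: "ld x11 (m (m (rd x10 x11) x12) x11) = m (ld x11 x10) (m (ld x11 x12) x11)" by (metis qf46 qf82)
lemma qf1556: "ld x11 (m x12 x11) = m (ld x11 x10) (m (ld x11 (ld (rd x10 x11) x12)) x11)" by (metis qf97 qf2)
lemma qf1607: "m (ld x11 x12) x11 = m (ld x11 x10) (m (ld x11 (ld (rd x10 x11) x12)) x11)" by (metis qf1556 qf82)
lemma qf46160: "m (ld x277 (ld (rd x278 x277) x279)) x277 = ld (ld x277 x278) (m (ld x277 x279) x277)" by (metis qf1 qf1607)
lemma qf46410: "m (ld (ld x4 x6) (m (ld x4 (m x5 x6)) x4)) (ld x4 x6) = m (m (m (ld x4 (ld (rd x6 x4) x5)) x4) (ld x4 x6)) x6" by (metis qf3335 qf46160)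
lemma qf46431: "m (m (m (ld x4 (ld (rd x6 x4) x5)) x4) (ld x4 x6)) x6 = m (m (ld x4 (ld (rd x6 x4) (m x5 x6))) x4) (ld x4 x6)" by (metis qf46410 qf46160)
lemma qf31: "ld (rd x3 x4) x3 = x4" by (metis qf1 qf4)
lemma qf276342: "m (m (ld x1 (ld (rd x0 x1) (m x0 x0))) x1) (ld x1 x0) = m (m (m (ld x1 x1) x1) (ld x1 x0)) x0" by (metis qf46431 qf31)
lemma qf277282: "m (m (ld x1 (ld (rd x0 x1) (m x0 x0))) x1) (ld x1 x0) = m (m (m e x1) (ld x1 x0)) x0" by (metis qf276342 qf15)
lemma qf277283: "m (m (ld x1 (ld (rd x0 x1) (m x0 x0))) x1) (ld x1 x0) = m (m x1 (ld x1 x0)) x0" by (metis qf277282 qf5)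
lemma qf277284: "m x0 x0 = m (m (ld x1 (ld (rd x0 x1) (m x0 x0))) x1) (ld x1 x0)" by (metis qf277283 qf2)
lemma qf334: "m (ld x0 (m (m x0 x1) x2)) x0 = m (m x1 x0) (m (ld x0 x2) x0)" by (metis qf108 qf1)
lemma qf2974: "m (m x0 (ld x0 x1)) (m (ld (ld x0 x1) (m (ld x0 x2) x0)) (ld x0 x1)) = m (ld (ld x0 x1) (m (ld x0 (m x1 x2)) x0)) (ld x0 x1)" by (metis qf334 qf108)
lemma qf3045: "m (ld (ld x0 x1) (m (ld x0 (m x1 x2)) x0)) (ld x0 x1) = m x1 (m (ld (ld x0 x1) (m (ld x0 x2) x0)) (ld x0 x1))" by (metis qf2974 qf2)
lemma qf46411: "m (ld (ld x0 x1) (m (ld x0 (m x1 x2)) x0)) (ld x0 x1) = m x1 (m (m (ld x0 (ld (rd x1 x0) x2)) x0) (ld x0 x1))" by (metis qf3045 qf46160)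
lemma qf46432: "m x1 (m (m (ld x0 (ld (rd x1 x0) x2)) x0) (ld x0 x1)) = m (m (ld x0 (ld (rd x1 x0) (m x1 x2))) x0) (ld x0 x1)" by (metis qf46411 qf46160)
lemma qf278779: "m (m x182 x182) (m (m (ld x183 (ld (rd (m x182 x182) x183) (ld x182 e))) x183) (ld x183 (m x182 x182))) = m (m (ld x183 (ld (rd (m x182 x182) x183) x182)) x183) (ld x183 (m x182 x182))" by (metis qf46432 qf114560)
lemma qf3975: "ld x4 (m x3 (m (ld x3 x4) (m (ld (ld x3 x4) x5) x6))) = m (ld x4 (m x3 x5)) (ld x4 (m x3 (m (ld x3 x4) x6)))" by (metis qf595 qf2)
lemma qf139: "m (ld (ld x1 x2) x1) (ld x1 x2) = ld (ld x1 x2) x2" by (metis qf82 qf2)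
lemma qf178989: "m (ld x81 (m x80 x80)) (ld x81 (m x80 (m (ld x80 x81) (ld x80 x81)))) = ld x81 (m x80 (m (ld x80 x81) (ld (ld x80 x81) x81)))" by (metis qf3975 qf139)
lemma qf179313: "ld x81 (m x80 x81) = m (ld x81 (m x80 x80)) (ld x81 (m x80 (m (ld x80 x81) (ld x80 x81))))" by (metis qf178989 qf2)
lemma qf179314: "m (ld x81 x80) x81 = m (ld x81 (m x80 x80)) (ld x81 (m x80 (m (ld x80 x81) (ld x80 x81))))" by (metis qf179313 qf82)
lemma qf178977: "m (ld x40 (m x39 e)) (ld x40 (m x39 (m (ld x39 x40) (ld x39 x40)))) = ld x40 (m x39 (m (ld x39 x40) e))" by (metis qf3975 qf151)
lemma qf179289: "m (ld x40 (m x39 e)) (ld x40 (m x39 (m (ld x39 x40) (ld x39 x40)))) = ld x40 (m x39 (ld x39 x40))" by (metis qf178977 qf6)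
lemma qf179290: "ld x40 x40 = m (ld x40 (m x39 e)) (ld x40 (m x39 (m (ld x39 x40) (ld x39 x40))))" by (metis qf179289 qf2)
lemma qf179291: "ld x40 x40 = m (ld x40 x39) (ld x40 (m x39 (m (ld x39 x40) (ld x39 x40))))" by (metis qf179290 qf6)
lemma qf179292: "e = m (ld x40 x39) (ld x40 (m x39 (m (ld x39 x40) (ld x39 x40))))" by (metis qf179291 qf15)
lemma qf477693: "ld (ld x193 x194) e = ld x193 (m x194 (m (ld x194 x193) (ld x194 x193)))" by (metis qf1 qf179292)
lemma qf479483: "m (ld x81 x80) x81 = m (ld x81 (m x80 x80)) (ld (ld x81 x80) e)" by (metis qf179314 qf477693)
lemma qf2998: "ld (ld x40 (m (m x40 x41) x42)) (m (m x41 x40) (m (ld x40 x42) x40)) = x40" by (metis qf1 qf334)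
lemma qf492427: "m (ld (ld x47 (m (m x47 (ld x47 x48)) x48)) (m (ld x47 x48) x47)) (ld x47 (m (m x47 (ld x47 x48)) x48)) = m x47 (ld (ld (ld x47 (m (m x47 (ld x47 x48)) x48)) (m (ld x47 x48) x47)) e)" by (metis qf479483 qf2998)
lemma qf493157: "m (m (ld x47 (ld (rd (m (m x47 (ld x47 x48)) x48) x47) x48)) x47) (ld x47 (m (m x47 (ld x47 x48)) x48)) = m x47 (ld (m (ld x47 (ld (rd (m (m x47 (ld x47 x48)) x48) x47) x48)) x47) e)" by (metis qf492427 qf46160)
lemma qf2849: "m (ld x2 (ld x3 e)) x2 = ld (m (ld x2 x3) x2) e" by (metis qf2133 qf160)
lemma qf493158: "m (m (ld x47 (ld (rd (m (m x47 (ld x47 x48)) x48) x47) x48)) x47) (ld x47 (m (m x47 (ld x47 x48)) x48)) = m x47 (m (ld x47 (ld (ld (rd (m (m x47 (ld x47 x48)) x48) x47) x48) e)) x47)" by (metis qf493157 qf2849)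
lemma qf493159: "m (m (ld x47 (ld (rd (m (m x47 (ld x47 x48)) x48) x47) x48)) x47) (ld x47 (m (m x47 (ld x47 x48)) x48)) = m (ld (ld (rd (m (m x47 (ld x47 x48)) x48) x47) x48) e) x47" by (metis qf493158 qf147)
lemma qf493160: "m (m (ld x47 (ld (rd (m x48 x48) x47) x48)) x47) (ld x47 (m x48 x48)) = m (ld (ld (rd (m x48 x48) x47) x48) e) x47" by (metis qf493159 qf2)
lemma qf493161: "m (m x182 x182) (m (m (ld x183 (ld (rd (m x182 x182) x183) (ld x182 e))) x183) (ld x183 (m x182 x182))) = m (ld (ld (rd (m x182 x182) x183) x182) e) x183" by (metis qf278779 qf493160)
lemma qf2821: "m (ld x0 (ld (m x0 x1) e)) x0 = rd e (m x1 x0)" by (metis qf2133 qf1)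
lemma qf2863: "m (ld x0 (ld (m x0 x1) e)) x0 = ld (m x1 x0) e" by (metis qf2821 qf160)
lemma qf492796: "ld (m (ld (ld x795 x796) e) (ld x795 (m x796 x796))) e = m (ld (ld x795 (m x796 x796)) (ld (m (ld x795 x796) x795) e)) (ld x795 (m x796 x796))" by (metis qf2863 qf479483)
lemma qf493787: "ld (m (ld (ld x795 x796) e) (ld x795 (m x796 x796))) e = m (ld (ld x795 (m x796 x796)) (m (ld x795 (ld x796 e)) x795)) (ld x795 (m x796 x796))" by (metis qf492796 qf2849)
lemma qf493788: "ld (m (ld (ld x795 x796) e) (ld x795 (m x796 x796))) e = m (m (ld x795 (ld (rd (m x796 x796) x795) (ld x796 e))) x795) (ld x795 (m x796 x796))" by (metis qf493787 qf46160)
lemma qf620: "ld x4 (m x3 (m (ld x3 x4) (m x5 x6))) = m (ld x4 (m x3 (m (ld x3 x4) x5))) (ld x4 (m x3 (m (ld x3 x4) x6)))" by (metis qf8 qf2)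
lemma qf4382: "ld x50 (m x49 (m (ld x49 x50) (m x52 (ld (ld x49 x50) x51)))) = m (ld x50 (m x49 (m (ld x49 x50) x52))) (ld x50 (m x49 x51))" by (metis qf620 qf2)
lemma qf189233: "ld x1 (m x0 (m (ld x0 x1) x2)) = m (ld x1 (m x0 (m (ld x0 x1) (ld x0 x1)))) (ld x1 (m x0 x2))" by (metis qf4382 qf2)
lemma qf479486: "ld x1 (m x0 (m (ld x0 x1) x2)) = m (ld (ld x1 x0) e) (ld x1 (m x0 x2))" by (metis qf189233 qf477693)
lemma qf493789: "m (m (ld x795 (ld (rd (m x796 x796) x795) (ld x796 e))) x795) (ld x795 (m x796 x796)) = ld (ld x795 (m x796 (m (ld x796 x795) x796))) e" by (metis qf493788 qf479486)
lemma qf4389: "ld (ld x0 (m x1 (m (ld x1 x0) (m x2 x2)))) (ld x0 (m x1 (m (ld x1 x0) x2))) = rd (ld x0 (m x1 (m (ld x1 x0) x2))) (ld x0 (m x1 (m (ld x1 x0) (m x2 x2))))" by (metis qf576 qf620)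
lemma qf32954: "ld (ld x12 (m x13 (m (ld x13 x12) x14))) e = rd (m (ld x12 (m x13 (m (ld x13 x12) (m x14 x14)))) (ld (ld x12 (m x13 (m (ld x13 x12) x14))) e)) (ld x12 (m x13 (m (ld x13 x12) (m x14 x14))))" by (metis qf8660 qf620)
lemma qf124136: "ld x15 (m x16 (m (ld x16 x15) x17)) = m (ld x15 (m x16 (m (ld x16 x15) (m x17 x17)))) (ld (ld x15 (m x16 (m (ld x16 x15) x17))) e)" by (metis qf114560 qf620)
lemma qf124854: "ld (ld x12 (m x13 (m (ld x13 x12) x14))) e = rd (ld x12 (m x13 (m (ld x13 x12) x14))) (ld x12 (m x13 (m (ld x13 x12) (m x14 x14))))" by (metis qf32954 qf124136)
lemma qf124856: "ld (ld x0 (m x1 (m (ld x1 x0) (m x2 x2)))) (ld x0 (m x1 (m (ld x1 x0) x2))) = ld (ld x0 (m x1 (m (ld x1 x0) x2))) e" by (metis qf4389 qf124854)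
lemma qf4392: "ld x9 (m x10 (m (ld x10 x9) x12)) = ld (ld x9 (m x10 (m (ld x10 x9) x11))) (ld x9 (m x10 (m (ld x10 x9) (m x11 x12))))" by (metis qf1 qf620)
lemma qf190219: "ld x211 (m x212 (m (ld x212 x211) (ld x210 e))) = ld (ld x211 (m x212 (m (ld x212 x211) (m x210 x210)))) (ld x211 (m x212 (m (ld x212 x211) x210)))" by (metis qf4392 qf114560)
lemma qf190791: "ld (ld x0 (m x1 (m (ld x1 x0) x2))) e = ld x0 (m x1 (m (ld x1 x0) (ld x2 e)))" by (metis qf124856 qf190219)
lemma qf493790: "m (m (ld x795 (ld (rd (m x796 x796) x795) (ld x796 e))) x795) (ld x795 (m x796 x796)) = ld x795 (m x796 (m (ld x796 x795) (ld x796 e)))" by (metis qf493789 qf190791)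
lemma qf1564: "m (m (rd x6 x5) x7) x5 = m x5 (m (ld x5 x6) (m (ld x5 x7) x5))" by (metis qf2 qf97)
lemma qf44123: "m (m (rd x9 x8) (ld x8 e)) x8 = m x8 (m (ld x8 x9) (ld x8 e))" by (metis qf1564 qf159)
lemma qf3480: "m (ld (ld x6 x7) (m (m (ld x6 x7) x8) x6)) (ld x6 x7) = m (m x8 (ld x6 x7)) (ld (ld x6 x7) x7)" by (metis qf123 qf1)
lemma qf54: "ld x11 (m (m x12 (rd x10 x11)) x11) = m (ld x11 (m x12 x11)) (ld x11 x10)" by (metis qf7 qf4)
lemma qf99: "ld x11 (m (m x12 (rd x10 x11)) x11) = m (m (ld x11 x12) x11) (ld x11 x10)" by (metis qf54 qf82)
lemma qf1807: "m (m x7 (rd x8 x6)) x6 = m x6 (m (m (ld x6 x7) x6) (ld x6 x8))" by (metis qf2 qf99)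
lemma qf47021: "m (m (ld x8 e) (rd x9 x8)) x8 = m x8 (m (ld x8 e) (ld x8 x9))" by (metis qf1807 qf159)
lemma qf140500: "m (ld x1 e) x2 = m x1 (m (ld x1 e) (ld x1 x2))" by (metis qf117154 qf2)
lemma qf141011: "m (ld x8 e) x9 = m (m (ld x8 e) (rd x9 x8)) x8" by (metis qf47021 qf140500)
lemma qf151041: "m (m (rd x3 x2) (ld x2 e)) (ld (ld x2 e) e) = m (ld (ld x2 e) (m (ld x2 e) x3)) (ld x2 e)" by (metis qf3480 qf141011)
lemma qf151480: "m x3 (ld x2 e) = m (m (rd x3 x2) (ld x2 e)) (ld (ld x2 e) e)" by (metis qf151041 qf1)
lemma qf151481: "m x3 (ld x2 e) = m (m (rd x3 x2) (ld x2 e)) x2" by (metis qf151480 qf161)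
lemma qf151482: "m x9 (ld x8 e) = m x8 (m (ld x8 x9) (ld x8 e))" by (metis qf44123 qf151481)
lemma qf493791: "m (m (ld x795 (ld (rd (m x796 x796) x795) (ld x796 e))) x795) (ld x795 (m x796 x796)) = ld x795 (m x795 (ld x796 e))" by (metis qf493790 qf151482)
lemma qf493792: "ld x796 e = m (m (ld x795 (ld (rd (m x796 x796) x795) (ld x796 e))) x795) (ld x795 (m x796 x796))" by (metis qf493791 qf1)
lemma qf493793: "m (m x182 x182) (ld x182 e) = m (ld (ld (rd (m x182 x182) x183) x182) e) x183" by (metis qf493161 qf493792)
lemma qf9: "rd (m (m (m x2 x3) x0) x1) (m x0 x1) = m (rd (m (m x2 x0) x1) (m x0 x1)) (rd (m (m x3 x0) x1) (m x0 x1))" by (fact r)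
lemma qf830: "rd (m (m (m x46 (rd x44 x45)) x45) x47) (m x45 x47) = m (rd (m (m x46 x45) x47) (m x45 x47)) (rd (m x44 x47) (m x45 x47))" by (metis qf9 qf4)
lemma qf8553: "m (ld x11 e) (m x11 x11) = m (m x11 x11) (ld x11 e)" by (metis qf147 qf2908)
lemma qf29610: "rd (m (m (m x11 (rd x12 x11)) x11) (ld x11 e)) (m x11 (ld x11 e)) = m (rd (m (ld x11 e) (m x11 x11)) (m x11 (ld x11 e))) (rd (m x12 (ld x11 e)) (m x11 (ld x11 e)))" by (metis qf830 qf8553)
lemma qf29832: "rd (m (m (m x11 (rd x12 x11)) x11) (ld x11 e)) e = m (rd (m (ld x11 e) (m x11 x11)) e) (rd (m x12 (ld x11 e)) e)" by (metis qf29610 qf2)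
lemma qf23: "rd x1 e = x1" by (metis qf3 qf6)
lemma qf29833: "rd (m (m (m x11 (rd x12 x11)) x11) (ld x11 e)) e = m (rd (m (ld x11 e) (m x11 x11)) e) (m x12 (ld x11 e))" by (metis qf29832 qf23)
lemma qf29834: "rd (m (m (m x11 (rd x12 x11)) x11) (ld x11 e)) e = m (m (ld x11 e) (m x11 x11)) (m x12 (ld x11 e))" by (metis qf29833 qf23)
lemma qf29835: "m (m (m x11 (rd x12 x11)) x11) (ld x11 e) = m (m (ld x11 e) (m x11 x11)) (m x12 (ld x11 e))" by (metis qf29834 qf23)
lemma qf29836: "m (m (ld x11 e) (m x11 x11)) (m x12 (ld x11 e)) = m (m x11 (m (rd x12 x11) x11)) (ld x11 e)" by (metis qf29835 qf92)
lemma qf29837: "m (m (ld x11 e) (m x11 x11)) (m x12 (ld x11 e)) = m (m x11 x12) (ld x11 e)" by (metis qf29836 qf4)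
lemma qf114369: "m (m x11 x12) (ld x11 e) = m x11 (m x12 (ld x11 e))" by (metis qf29837 qf114291)
lemma qf493795: "m x182 (m x182 (ld x182 e)) = m (ld (ld (rd (m x182 x182) x183) x182) e) x183" by (metis qf493793 qf114369)
lemma qf493796: "m x182 e = m (ld (ld (rd (m x182 x182) x183) x182) e) x183" by (metis qf493795 qf2)
lemma qf493797: "m (ld (ld (rd (m x182 x182) x183) x182) e) x183 = x182" by (metis qf493796 qf6)
lemma qf497365: "m (ld (ld x52 x51) e) (ld x52 (m x51 x51)) = x51" by (metis qf493797 qf24)
lemma qf502274: "m (ld x319 e) (ld (rd x318 x319) (m x318 x318)) = x318" by (metis qf497365 qf31)
lemma qf511343: "ld (ld x151 e) x152 = ld (rd x152 x151) (m x152 x152)" by (metis qf1 qf502274)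
lemma qf530699: "m x0 x0 = m (m (ld x1 (ld (ld x1 e) x0)) x1) (ld x1 x0)" by (metis qf277284 qf511343)
lemma qf59: "ld x3 (m x5 x3) = ld (ld x3 (m x4 x3)) (ld x3 (m (m x4 x5) x3))" by (metis qf1 qf7)
lemma qf102: "ld x3 (m x5 x3) = ld (m (ld x3 x4) x3) (ld x3 (m (m x4 x5) x3))" by (metis qf59 qf82)
lemma qf119: "ld x3 (m x5 x3) = ld (m (ld x3 x4) x3) (m (ld x3 (m x4 x5)) x3)" by (metis qf102 qf82)
lemma qf120: "ld (m (ld x3 x4) x3) (m (ld x3 (m x4 x5)) x3) = m (ld x3 x5) x3" by (metis qf119 qf82)
lemma qf2448: "m (ld x4 (ld x2 x3)) x4 = ld (m (ld x4 x2) x4) (m (ld x4 x3) x4)" by (metis qf120 qf2)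
lemma qf56542: "m (ld x8 (ld (ld x8 e) x9)) x8 = ld (ld x8 e) (m (ld x8 x9) x8)" by (metis qf2448 qf159)
lemma qf3283: "ld x46 (m x47 (m x46 x48)) = rd (m (m (ld x46 x47) x46) (m x48 x46)) x46" by (metis qf3 qf344)
lemma qf67318: "ld (ld x80 e) (m x81 (m (ld x80 e) (m x80 x80))) = rd (m (m (ld (ld x80 e) x81) (ld x80 e)) (m (ld x80 e) (m x80 x80))) (ld x80 e)" by (metis qf3283 qf8553)
lemma qf808: "rd (m (m (m (rd x44 x45) x46) x45) x47) (m x45 x47) = m (rd (m x44 x47) (m x45 x47)) (rd (m (m x46 x45) x47) (m x45 x47))" by (metis qf9 qf4)
lemma qf29609: "rd (m (m (m (rd x10 x9) x9) x9) (ld x9 e)) (m x9 (ld x9 e)) = m (rd (m x10 (ld x9 e)) (m x9 (ld x9 e))) (rd (m (ld x9 e) (m x9 x9)) (m x9 (ld x9 e)))" by (metis qf808 qf8553)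
lemma qf29827: "rd (m (m (m (rd x10 x9) x9) x9) (ld x9 e)) e = m (rd (m x10 (ld x9 e)) e) (rd (m (ld x9 e) (m x9 x9)) e)" by (metis qf29609 qf2)
lemma qf29828: "rd (m (m (m (rd x10 x9) x9) x9) (ld x9 e)) e = m (rd (m x10 (ld x9 e)) e) (m (ld x9 e) (m x9 x9))" by (metis qf29827 qf23)
lemma qf29829: "rd (m (m (m (rd x10 x9) x9) x9) (ld x9 e)) e = m (m x10 (ld x9 e)) (m (ld x9 e) (m x9 x9))" by (metis qf29828 qf23)
lemma qf29830: "m (m (m (rd x10 x9) x9) x9) (ld x9 e) = m (m x10 (ld x9 e)) (m (ld x9 e) (m x9 x9))" by (metis qf29829 qf23)
lemma qf29831: "m (m x10 (ld x9 e)) (m (ld x9 e) (m x9 x9)) = m (m x10 x9) (ld x9 e)" by (metis qf29830 qf4)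
lemma qf67550: "ld (ld x80 e) (m x81 (m (ld x80 e) (m x80 x80))) = rd (m (m (ld (ld x80 e) x81) x80) (ld x80 e)) (ld x80 e)" by (metis qf67318 qf29831)
lemma qf67551: "ld (ld x80 e) (m x81 (m (ld x80 e) (m x80 x80))) = m (ld (ld x80 e) x81) x80" by (metis qf67550 qf3)
lemma qf114491: "m (ld (ld x80 e) x81) x80 = ld (ld x80 e) (m x81 x80)" by (metis qf67551 qf114291)
lemma qf44136: "m (m (rd x39 (ld x38 e)) x38) (ld x38 e) = m (ld x38 e) (m (ld (ld x38 e) x39) x38)" by (metis qf1564 qf398)
lemma qf4032: "ld (m (ld (m x19 x19) x19) x19) (m (ld (m x19 x19) x19) (m x19 (m (ld x19 x20) x19))) = m (ld (m (ld (m x19 x19) x19) x19) (m (ld (m x19 x19) x19) x20)) (ld (m (ld (m x19 x19) x19) x19) x19)" by (metis qf595 qf310)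
lemma qf4117: "ld (m x19 (ld (m x19 x19) x19)) (m (ld (m x19 x19) x19) (m x19 (m (ld x19 x20) x19))) = m (ld (m x19 (ld (m x19 x19) x19)) (m (ld (m x19 x19) x19) x20)) (ld (m x19 (ld (m x19 x19) x19)) x19)" by (metis qf4032 qf585)
lemma qf4118: "m (ld (m x19 (ld (m x19 x19) x19)) (m (ld (m x19 x19) x19) x20)) (ld (m x19 (ld (m x19 x19) x19)) x19) = ld (m x19 (ld (m x19 x19) x19)) (m (ld (m x19 x19) x19) (m x20 x19))" by (metis qf4117 qf147)
lemma qf115753: "m (ld (m x19 (ld x19 e)) (m (ld x19 e) x20)) (ld (m x19 (ld x19 e)) x19) = ld (m x19 (ld x19 e)) (m (ld x19 e) (m x20 x19))" by (metis qf4118 qf115713)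
lemma qf116684: "m (ld e (m (ld x19 e) x20)) (ld e x19) = ld e (m (ld x19 e) (m x20 x19))" by (metis qf115753 qf2)
lemma qf116685: "m (ld x19 e) (m x20 x19) = m (ld e (m (ld x19 e) x20)) (ld e x19)" by (metis qf116684 qf14)
lemma qf116686: "m (ld x19 e) (m x20 x19) = m (ld e (m (ld x19 e) x20)) x19" by (metis qf116685 qf14)
lemma qf116687: "m (m (ld x19 e) x20) x19 = m (ld x19 e) (m x20 x19)" by (metis qf116686 qf14)
lemma qf139515: "m x23 x22 = m (ld x22 e) (m (ld (ld x22 e) x23) x22)" by (metis qf116687 qf2)
lemma qf140081: "m x39 x38 = m (m (rd x39 (ld x38 e)) x38) (ld x38 e)" by (metis qf44136 qf139515)
lemma qf168913: "m (ld (ld x46 e) x47) x46 = m (m (ld (ld x46 e) (rd x47 (ld x46 e))) x46) (ld x46 e)" by (metis qf140081 qf203)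
lemma qf511307: "m (ld (ld x46 e) (m x47 x46)) (ld x46 e) = m (m (ld (rd x47 x46) (m x47 x47)) (ld x46 e)) (ld (ld x46 e) e)" by (metis qf3480 qf502274)
lemma qf512030: "m (ld (ld x46 e) (m x47 x46)) (ld x46 e) = m (m (ld (rd x47 x46) (m x47 x47)) (ld x46 e)) x46" by (metis qf511307 qf161)
lemma qf492569: "m x319 (rd x318 x319) = m (ld (rd x318 x319) (m x318 x318)) (ld x319 e)" by (metis qf479483 qf31)
lemma qf512031: "m (m x46 (rd x47 x46)) x46 = m (ld (ld x46 e) (m x47 x46)) (ld x46 e)" by (metis qf512030 qf492569)
lemma qf512032: "m (m x46 (rd x47 x46)) x46 = m (m (ld (ld x46 e) x47) x46) (ld x46 e)" by (metis qf512031 qf114491)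
lemma qf512033: "m (m (ld (ld x46 e) x47) x46) (ld x46 e) = m x46 (m (rd x47 x46) x46)" by (metis qf512032 qf92)
lemma qf512034: "m x46 x47 = m (m (ld (ld x46 e) x47) x46) (ld x46 e)" by (metis qf512033 qf4)
lemma qf512227: "m (ld (ld x46 e) x47) x46 = m x46 (rd x47 (ld x46 e))" by (metis qf168913 qf512034)
lemma qf529180: "ld (ld x80 e) (m x81 x80) = m x80 (rd x81 (ld x80 e))" by (metis qf114491 qf512227)
lemma qf529710: "m (ld x8 (ld (ld x8 e) x9)) x8 = m x8 (rd (ld x8 x9) (ld x8 e))" by (metis qf56542 qf529180)
lemma qf2999: "ld x43 (m (m x43 x44) x45) = rd (m (m x44 x43) (m (ld x43 x45) x43)) x43" by (metis qf3 qf334)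
lemma qf62697: "ld x8 (m (m x8 x9) (ld x8 e)) = rd (m (m x9 x8) (ld x8 e)) x8" by (metis qf2999 qf159)
lemma qf121656: "rd (m (m x9 x8) (ld x8 e)) x8 = ld x8 (m x8 (m x9 (ld x8 e)))" by (metis qf62697 qf114369)
lemma qf121932: "m x9 (ld x8 e) = rd (m (m x9 x8) (ld x8 e)) x8" by (metis qf121656 qf1)
lemma qf1797: "m (m (ld x22 (rd x20 (rd x21 x22))) x22) (ld x22 x21) = ld x22 (m x20 x22)" by (metis qf99 qf4)
lemma qf1854: "m (m (ld x22 (rd x20 (rd x21 x22))) x22) (ld x22 x21) = m (ld x22 x20) x22" by (metis qf1797 qf82)
lemma qf149090: "rd (m (ld x3 x4) x3) x3 = m (ld x3 (rd x4 (rd e x3))) (ld x3 e)" by (metis qf121932 qf1854)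
lemma qf149415: "rd (m (ld x3 x4) x3) x3 = m (ld x3 (rd x4 (ld x3 e))) (ld x3 e)" by (metis qf149090 qf160)
lemma qf149416: "ld x3 x4 = m (ld x3 (rd x4 (ld x3 e))) (ld x3 e)" by (metis qf149415 qf3)
lemma qf222907: "ld x75 (rd x76 (ld x75 e)) = rd (ld x75 x76) (ld x75 e)" by (metis qf3 qf149416)
lemma qf529711: "m (ld x8 (ld (ld x8 e) x9)) x8 = m x8 (ld x8 (rd x9 (ld x8 e)))" by (metis qf529710 qf222907)
lemma qf529712: "rd x9 (ld x8 e) = m (ld x8 (ld (ld x8 e) x9)) x8" by (metis qf529711 qf2)
lemma qf530762: "m x0 x0 = m (rd x0 (ld x1 e)) (ld x1 x0)" by (metis qf530699 qf529712)
lemma qf532545: "rd x168 (ld x169 e) = rd (m x168 x168) (ld x169 x168)" by (metis qf3 qf530762)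
lemma qf123040: "ld (ld x202 e) (m x202 (m (ld x202 e) x203)) = rd (m (m (m x202 x202) (ld x202 e)) (m x203 (ld x202 e))) (ld x202 e)" by (metis qf3283 qf114559)
lemma qf840: "rd (m (m (m x5 x6) x3) (ld x3 x4)) x4 = m (rd (m (m x5 x3) (ld x3 x4)) x4) (rd (m (m x6 x3) (ld x3 x4)) x4)" by (metis qf9 qf2)
lemma qf7325: "rd (m (m (m x3 x5) x4) (ld x4 e)) e = m (m (m x3 x4) (ld x4 e)) (rd (m (m x5 x4) (ld x4 e)) e)" by (metis qf840 qf23)
lemma qf7459: "rd (m (m (m x3 x5) x4) (ld x4 e)) e = m (m (m x3 x4) (ld x4 e)) (m (m x5 x4) (ld x4 e))" by (metis qf7325 qf23)
lemma qf7460: "m (m (m x3 x5) x4) (ld x4 e) = m (m (m x3 x4) (ld x4 e)) (m (m x5 x4) (ld x4 e))" by (metis qf7459 qf23)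
lemma qf73774: "m (m (m x313 (rd x311 x312)) x312) (ld x312 e) = m (m (m x313 x312) (ld x312 e)) (m x311 (ld x312 e))" by (metis qf7460 qf4)
lemma qf123549: "ld (ld x202 e) (m x202 (m (ld x202 e) x203)) = rd (m (m (m x202 (rd x203 x202)) x202) (ld x202 e)) (ld x202 e)" by (metis qf123040 qf73774)
lemma qf123550: "ld (ld x202 e) (m x202 (m (ld x202 e) x203)) = m (m x202 (rd x203 x202)) x202" by (metis qf123549 qf3)
lemma qf123551: "ld (ld x202 e) (m x202 (m (ld x202 e) x203)) = m x202 (m (rd x203 x202) x202)" by (metis qf123550 qf92)
lemma qf123552: "m x202 x203 = ld (ld x202 e) (m x202 (m (ld x202 e) x203))" by (metis qf123551 qf4)
lemma qf546289: "rd (m x221 (m (ld x221 e) x222)) (ld (ld x221 e) e) = rd (m (m x221 (m (ld x221 e) x222)) (m x221 (m (ld x221 e) x222))) (m x221 x222)" by (metis qf532545 qf123552)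
lemma qf4342: "ld e (m x3 (m (ld x3 e) (m x4 x5))) = m (m x3 (m (ld x3 e) x4)) (ld e (m x3 (m (ld x3 e) x5)))" by (metis qf620 qf14)
lemma qf4462: "ld e (m x3 (m (ld x3 e) (m x4 x5))) = m (m x3 (m (ld x3 e) x4)) (m x3 (m (ld x3 e) x5))" by (metis qf4342 qf14)
lemma qf4463: "m x3 (m (ld x3 e) (m x4 x5)) = m (m x3 (m (ld x3 e) x4)) (m x3 (m (ld x3 e) x5))" by (metis qf4462 qf14)
lemma qf546729: "rd (m x221 (m (ld x221 e) x222)) (ld (ld x221 e) e) = rd (m x221 (m (ld x221 e) (m x222 x222))) (m x221 x222)" by (metis qf546289 qf4463)
lemma qf546730: "rd (m x221 (m (ld x221 e) x222)) x221 = rd (m x221 (m (ld x221 e) (m x222 x222))) (m x221 x222)" by (metis qf546729 qf161)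
lemma qf546731: "m x221 (rd (m (ld x221 e) x222) x221) = rd (m x221 (m (ld x221 e) (m x222 x222))) (m x221 x222)" by (metis qf546730 qf272)
lemma qf67271: "ld x11 (m (ld x11 e) (m x11 x12)) = rd (m (ld x11 e) (m x12 x11)) x11" by (metis qf3283 qf159)
lemma qf117177: "rd (m (ld x11 e) (m x12 x11)) x11 = ld x11 (m x11 (m (ld x11 e) x12))" by (metis qf67271 qf117154)
lemma qf119100: "m (ld x11 e) x12 = rd (m (ld x11 e) (m x12 x11)) x11" by (metis qf117177 qf1)
lemma qf145323: "m (ld x283 e) (rd x282 x283) = rd (m (ld x283 e) x282) x283" by (metis qf119100 qf4)
lemma qf546732: "rd (m x221 (m (ld x221 e) (m x222 x222))) (m x221 x222) = m x221 (m (ld x221 e) (rd x222 x221))" by (metis qf546731 qf145323)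
lemma qf151094: "m x183 (m (ld x183 e) (rd x184 x183)) = rd (m x183 (m (ld x183 e) x184)) x183" by (metis qf187 qf141011)
lemma qf139516: "m (m x25 (ld x24 e)) x24 = m (ld x24 e) (m (m (ld (ld x24 e) x25) (ld x24 e)) x24)" by (metis qf116687 qf147)
lemma qf731: "m (ld (ld x0 e) (m x1 x0)) (ld x0 e) = m (m (ld (ld x0 e) x1) (ld x0 e)) x0" by (metis qf108 qf398)
lemma qf29533: "m (m (ld (ld x99 e) x100) (ld x99 e)) (m (m x99 x99) (ld x99 e)) = m (ld (ld x99 e) (m x100 (m (m x99 x99) (ld x99 e)))) (ld x99 e)" by (metis qf344 qf8553)
lemma qf73655: "m (m (m (rd x311 x312) x313) x312) (ld x312 e) = m (m x311 (ld x312 e)) (m (m x313 x312) (ld x312 e))" by (metis qf7460 qf4)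
lemma qf74112: "m (ld (ld x99 e) (m x100 (m (m x99 x99) (ld x99 e)))) (ld x99 e) = m (m (m (rd (ld (ld x99 e) x100) x99) x99) x99) (ld x99 e)" by (metis qf29533 qf73655)
lemma qf74125: "m (ld (ld x99 e) (m x100 (m (m x99 x99) (ld x99 e)))) (ld x99 e) = m (m (ld (ld x99 e) x100) x99) (ld x99 e)" by (metis qf74112 qf4)
lemma qf115673: "m (m (ld (ld x99 e) x100) x99) (ld x99 e) = m (ld (ld x99 e) (m x100 x99)) (ld x99 e)" by (metis qf74125 qf114560)
lemma qf120862: "m (m (ld (ld x0 e) x1) (ld x0 e)) x0 = m (m (ld (ld x0 e) x1) x0) (ld x0 e)" by (metis qf731 qf115673)
lemma qf140083: "m (m x25 (ld x24 e)) x24 = m (ld x24 e) (m (m (ld (ld x24 e) x25) x24) (ld x24 e))" by (metis qf139516 qf120862)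
lemma qf114368: "m (m x10 x9) (ld x9 e) = m (m x10 (ld x9 e)) x9" by (metis qf29831 qf114291)
lemma qf140084: "m (m x25 x24) (ld x24 e) = m (ld x24 e) (m (m (ld (ld x24 e) x25) x24) (ld x24 e))" by (metis qf140083 qf114368)
lemma qf512048: "m (m x25 x24) (ld x24 e) = m (ld x24 e) (m x24 x25)" by (metis qf140084 qf512034)
lemma qf516143: "m (m x25 x24) (ld x24 e) = m x24 (m (ld x24 e) x25)" by (metis qf512048 qf117154)
lemma qf516428: "m x9 (ld x8 e) = rd (m x8 (m (ld x8 e) x9)) x8" by (metis qf121932 qf516143)
lemma qf519981: "m x183 (m (ld x183 e) (rd x184 x183)) = m x184 (ld x183 e)" by (metis qf151094 qf516428)
lemma qf546733: "m x222 (ld x221 e) = rd (m x221 (m (ld x221 e) (m x222 x222))) (m x221 x222)" by (metis qf546732 qf519981)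
lemma qf546734: "m (ld a e) b = m b (ld a e)" by (metis qf117199 qf546733)
lemma qf555031: "rd (m b (ld a e)) (ld a e) = m (ld a e) (rd b (ld a e))" by (metis qf272 qf546734)
lemma qf46086: "m (ld x105 x106) x105 = m (ld x105 e) (m (ld x105 (ld (ld x105 e) x106)) x105)" by (metis qf1607 qf160)
lemma qf529713: "m (ld x105 x106) x105 = m (ld x105 e) (rd x106 (ld x105 e))" by (metis qf46086 qf529712)
lemma qf558190: "m (ld a b) a = rd (m b (ld a e)) (ld a e)" by (metis qf555031 qf529713)
lemma qf558191: "b = m (ld a b) a" by (metis qf558190 qf3)
lemma qf568492: "m a b = m b a" by (metis qf147 qf558191)
end

lemma mk_aloop:
  assumes A: "automorphic_loop m e"
  shows "aloop m (\<lambda>x y. THE z. m x z = y) (\<lambda>y x. THE z. m z x = y) e"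
proof -
  have L: "loop m e" and AU: "\<And>f. f \<in> inner_maps m e \<Longrightarrow> loop_aut m f"
    using A unfolding automorphic_loop_def by auto
  have u1: "\<And>a b. \<exists>!x. m a x = b" and u2: "\<And>a b. \<exists>!y. m y a = b"
    and id1: "\<And>x. m e x = x" and id2: "\<And>x. m x e = x"
    using L unfolding loop_def by auto
  define ld where "ld = (\<lambda>x y. THE z. m x z = y)"
  define rd where "rd = (\<lambda>y x. THE z. m z x = y)"
  have a2: "m x (ld x y) = y" for x y unfolding ld_def using theI'[OF u1] by blast
  have a1: "ld x (m x y) = y" for x y unfolding ld_def using u1 by (simp add: the1_equality)
  have a4: "m (rd x y) y = x" for x y unfolding rd_def using theI'[OF u2] by blast
  have a3: "rd (m x y) y = x" for x y unfolding rd_def using u2 by (simp add: the1_equality)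
  have il: "inv (lmult m x) = ld x" for x
    by (rule inv_equality) (simp_all add: lmult_def a1 a2)
  have ir: "inv (rmult m x) = (\<lambda>y. rd y x)" for x
    by (rule inv_equality) (simp_all add: rmult_def a3 a4)
  have hom: "\<And>f. f \<in> mlt_group m \<Longrightarrow> f e = e \<Longrightarrow> f (m u v) = m (f u) (f v)" for u v
    using AU unfolding inner_maps_def loop_aut_def by blast
  have t: "ld x (m (m y z) x) = m (ld x (m y x)) (ld x (m z x))" for x y z
  proof -
    let ?f = "inv (lmult m x) \<circ> (rmult m x \<circ> id)"
    have g: "?f \<in> mlt_group m" by (intro mlt_group.intros)
    have f: "?f = (\<lambda>z. ld x (m z x))" by (auto simp: il rmult_def)
    have "?f e = e" unfolding f using a1[of x e] id1 id2 by simp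
    from hom[OF g this] show ?thesis unfolding f by simp
  qed
  have l: "ld (m y x) (m y (m x (m z w))) = m (ld (m y x) (m y (m x z))) (ld (m y x) (m y (m x w)))" for x y z w
  proof -
    let ?f = "inv (lmult m (m y x)) \<circ> (lmult m y \<circ> (lmult m x \<circ> id))"
    have g: "?f \<in> mlt_group m" by (intro mlt_group.intros)
    have f: "?f = (\<lambda>z. ld (m y x) (m y (m x z)))" by (simp only: il) (auto simp: lmult_def)
    have "?f e = e" unfolding f using a1[of "m y x" e] id1 id2 by simp
    from hom[OF g this] show ?thesis unfolding f by simp
  qed
  have r: "rd (m (m (m z w) x) y) (m x y) = m (rd (m (m z x) y) (m x y)) (rd (m (m w x) y) (m x y))" for x y z w
  proof -
    let ?f = "inv (rmult m (m x y)) \<circ> (rmult m y \<circ> (rmult m x \<circ> id))"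
    have g: "?f \<in> mlt_group m" by (intro mlt_group.intros)
    have f: "?f = (\<lambda>z. rd (m (m z x) y) (m x y))" by (simp only: ir) (auto simp: rmult_def)
    have "?f e = e" unfolding f using a3[of e "m x y"] id1 id2 by simp
    from hom[OF g this] show ?thesis unfolding f by simp
  qed
  show ?thesis unfolding ld_def[symmetric] rd_def[symmetric]
    by unfold_locales (fact a1 a2 a3 a4 id1 id2 t l r)+
qed

theorem corollary3p1:
  fixes m :: "'a \<Rightarrow> 'a \<Rightarrow> 'a" and e x y :: 'a
  assumes "automorphic_loop m e"
    and "m (loop_inv m e x) (m x (m y y)) = m (m x y) (m (loop_inv m e x) y)
         \<or> m (loop_inv m e x) (m x (m y y)) = m (m (loop_inv m e x) y) (m x y)"
  shows "m x y = m y x"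
proof -
  interpret aloop m "\<lambda>x y. THE z. m x z = y" "\<lambda>y x. THE z. m z x = y" e
    by (rule mk_aloop[OF assms(1)])
  have li: "loop_inv m e x = (THE z. m x z = e)" unfolding loop_inv_def ..
  from assms(2) show ?thesis
  proof
    assume h: "m (loop_inv m e x) (m x (m y y)) = m (m x y) (m (loop_inv m e x) y)"
    interpret aloop1 m "\<lambda>x y. THE z. m x z = y" "\<lambda>y x. THE z. m z x = y" e x y
      by unfold_locales (use h li in simp)
    show ?thesis by (rule goal)
  next
    assume h: "m (loop_inv m e x) (m x (m y y)) = m (m (loop_inv m e x) y) (m x y)"
    interpret aloop2 m "\<lambda>x y. THE z. m x z = y" "\<lambda>y x. THE z. m z x = y" e x y
      by unfold_locales (use h li in simp)
    show ?thesis by (rule qf568492)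
  qed
qed

end
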